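(* Let $\Lambda$ be an isolated set of a partial flow $\phi$ on a metric space $X$. Let $N$ be an isolating neighborhood of $\Lambda$ and $\mathcal L_1\colon N\to\mathbb{R}$ a catenary function for $\Lambda$. Let $\delta>0$ be such that $\mathcal B=\{x\in N:\mathcal L_1(x)\le\delta\}$ is contained in the interior of $N$, and let $\partial\mathcal B$ denote the boundary of $\mathcal B$. Let $a\colon\mathcal B\setminus\Lambda\to(0,\infty)$ be continuous with $\dot a=0$ and $\inf a>0$, and let $f\colon\partial\mathcal B\to\mathbb{R}$ be continuous. Then there is a unique continuous function $\mathcal L_2\colon\mathcal B\to\mathbb{R}$ such that: - $\mathcal L_2(\Lambda)=0$; - $\ddot{\mathcal L}_2(x)=a(x)^2\mathcal L_2(x)$ for all $x\in\mathcal B\setminus\Lambda$; - $\mathcal L_2(x)=f(x)$ for all $x\in\partial\mathcal B$. If in addition $f>0$, then $\mathcal L_2(x)>0$ for all $x\in\mathcal B\setminus\Lambda$.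
   Context: A partial flow on a metric space $X$ is a continuous map $\phi\colon\Gamma\to X$ on an open set $\Gamma\subset\mathbb{R}\times X$. Here $\Gamma_x=\{t:(t,x)\in\Gamma\}$ is a connected set containing $0$, $\Gamma_{\phi_t(x)}=\Gamma_x-t$, $\phi_0=\mathrm{id}$, and $\phi_s\phi_t=\phi_{s+t}$ where defined. A $\phi$-invariant set $\Lambda$ is isolated if it has a compact neighborhood $N$ (an isolating neighborhood) such that $\phi_{\Gamma_x}(x)\subseteq N$ implies $x\in\Lambda$. $\dot{\mathcal L}(x)=\lim_{t\to0}(\mathcal L(\phi_t(x))-\mathcal L(x))/t$ and $\ddot{\mathcal L}=(\dot{\mathcal L})^{\cdot}$. A catenary function for $\Lambda$ is a continuous $\mathcal L\colon N\to\mathbb{R}$ on an isolating neighborhood $N$ with $\mathcal L(\Lambda)=0$, $\mathcal L>0$ on $N\setminus\Lambda$, and $\ddot{\mathcal L}=\mathcal L$ on $N$. *)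

theory Defs
  imports "HOL-Analysis.Analysis"
begin

text \<open>The metric space X is the type 'a. A partial flow is given by its domain
  Gamma (a subset of R x X) and the map phi, curried as phi t x; values of phi
  outside Gamma are irrelevant.\<close>

definition flow_dom :: "(real \<times> 'a) set \<Rightarrow> 'a \<Rightarrow> real set" where
  "flow_dom \<Gamma> x = {t. (t, x) \<in> \<Gamma>}"

definition partial_flow :: "(real \<times> 'a::metric_space) set \<Rightarrow> (real \<Rightarrow> 'a \<Rightarrow> 'a) \<Rightarrow> bool" where
  "partial_flow \<Gamma> \<phi> \<longleftrightarrow>
     open \<Gamma> \<and>
     continuous_on \<Gamma> (\<lambda>(t, x). \<phi> t x) \<and>
     (\<forall>x. connected (flow_dom \<Gamma> x) \<and> 0 \<in> flow_dom \<Gamma> x) \<and>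
     (\<forall>x t. t \<in> flow_dom \<Gamma> x \<longrightarrow> flow_dom \<Gamma> (\<phi> t x) = (\<lambda>s. s - t) ` flow_dom \<Gamma> x) \<and>
     (\<forall>x. \<phi> 0 x = x) \<and>
     (\<forall>x s t. t \<in> flow_dom \<Gamma> x \<longrightarrow> s \<in> flow_dom \<Gamma> (\<phi> t x) \<longrightarrow> \<phi> s (\<phi> t x) = \<phi> (s + t) x)"

definition flow_invariant :: "(real \<times> 'a) set \<Rightarrow> (real \<Rightarrow> 'a \<Rightarrow> 'a) \<Rightarrow> 'a set \<Rightarrow> bool" where
  "flow_invariant \<Gamma> \<phi> \<Lambda> \<longleftrightarrow> (\<forall>x\<in>\<Lambda>. \<forall>t\<in>flow_dom \<Gamma> x. \<phi> t x \<in> \<Lambda>)"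

definition isolating_nbhd :: "(real \<times> 'a::metric_space) set \<Rightarrow> (real \<Rightarrow> 'a \<Rightarrow> 'a) \<Rightarrow> 'a set \<Rightarrow> 'a set \<Rightarrow> bool" where
  "isolating_nbhd \<Gamma> \<phi> \<Lambda> N \<longleftrightarrow>
     compact N \<and> \<Lambda> \<subseteq> interior N \<and>
     (\<forall>x. (\<lambda>t. \<phi> t x) ` flow_dom \<Gamma> x \<subseteq> N \<longrightarrow> x \<in> \<Lambda>)"

definition isolated_set :: "(real \<times> 'a::metric_space) set \<Rightarrow> (real \<Rightarrow> 'a \<Rightarrow> 'a) \<Rightarrow> 'a set \<Rightarrow> bool" where
  "isolated_set \<Gamma> \<phi> \<Lambda> \<longleftrightarrow> flow_invariant \<Gamma> \<phi> \<Lambda> \<and> (\<exists>N. isolating_nbhd \<Gamma> \<phi> \<Lambda> N)"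

definition has_lie_deriv :: "(real \<times> 'a) set \<Rightarrow> (real \<Rightarrow> 'a \<Rightarrow> 'a) \<Rightarrow> 'a set \<Rightarrow> ('a \<Rightarrow> real) \<Rightarrow> 'a \<Rightarrow> real \<Rightarrow> bool" where
  "has_lie_deriv \<Gamma> \<phi> D L x l \<longleftrightarrow>
     ((\<lambda>t. (L (\<phi> t x) - L x) / t) \<longlongrightarrow> l) (at 0 within {t. (t, x) \<in> \<Gamma> \<and> \<phi> t x \<in> D})"

definition second_lie_deriv_eq :: "(real \<times> 'a) set \<Rightarrow> (real \<Rightarrow> 'a \<Rightarrow> 'a) \<Rightarrow> 'a set \<Rightarrow> ('a \<Rightarrow> real) \<Rightarrow> ('a \<Rightarrow> real) \<Rightarrow> bool" where
  "second_lie_deriv_eq \<Gamma> \<phi> D L g \<longleftrightarrow>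
     (\<exists>L'. (\<forall>x\<in>D. has_lie_deriv \<Gamma> \<phi> D L x (L' x)) \<and> (\<forall>x\<in>D. has_lie_deriv \<Gamma> \<phi> D L' x (g x)))"

definition catenary :: "(real \<times> 'a::metric_space) set \<Rightarrow> (real \<Rightarrow> 'a \<Rightarrow> 'a) \<Rightarrow> 'a set \<Rightarrow> 'a set \<Rightarrow> ('a \<Rightarrow> real) \<Rightarrow> bool" where
  "catenary \<Gamma> \<phi> \<Lambda> N L \<longleftrightarrow>
     isolating_nbhd \<Gamma> \<phi> \<Lambda> N \<and>
     continuous_on N L \<and>
     (\<forall>x\<in>\<Lambda>. L x = 0) \<and>
     (\<forall>x\<in>N - \<Lambda>. L x > 0) \<and>
     second_lie_deriv_eq \<Gamma> \<phi> N L L"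

end

theory Submission
  imports Defs
begin


lemma pf_open: "partial_flow \<Gamma> \<phi> \<Longrightarrow> open \<Gamma>" by (simp add: partial_flow_def)
lemma pf_cont: "partial_flow \<Gamma> \<phi> \<Longrightarrow> continuous_on \<Gamma> (\<lambda>(t, x). \<phi> t x)" by (simp add: partial_flow_def)
lemma pf_zero: "partial_flow \<Gamma> \<phi> \<Longrightarrow> (0, x) \<in> \<Gamma>" by (simp add: partial_flow_def flow_dom_def)
lemma pf_id: "partial_flow \<Gamma> \<phi> \<Longrightarrow> \<phi> 0 x = x" by (simp add: partial_flow_def)

lemma pf_shift:
  assumes "partial_flow \<Gamma> \<phi>" "(t, x) \<in> \<Gamma>"
  shows "(s, \<phi> t x) \<in> \<Gamma> \<longleftrightarrow> (s + t, x) \<in> \<Gamma>"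
proof -
  have "flow_dom \<Gamma> (\<phi> t x) = (\<lambda>s. s - t) ` flow_dom \<Gamma> x"
    using assms by (auto simp: partial_flow_def flow_dom_def)
  then have "s \<in> flow_dom \<Gamma> (\<phi> t x) \<longleftrightarrow> s \<in> (\<lambda>s. s - t) ` flow_dom \<Gamma> x" by simp
  also have "\<dots> \<longleftrightarrow> s + t \<in> flow_dom \<Gamma> x"
    by (auto simp: image_iff intro!: bexI[of _ "s+t"])
  finally show ?thesis by (simp add: flow_dom_def)
qed

lemma pf_comp:
  assumes "partial_flow \<Gamma> \<phi>" "(t, x) \<in> \<Gamma>" "(s + t, x) \<in> \<Gamma>"
  shows "\<phi> s (\<phi> t x) = \<phi> (s + t) x"
proof -
  have "(s, \<phi> t x) \<in> \<Gamma>" using pf_shift[OF assms(1,2)] assms(3) by simp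
  then show ?thesis using assms unfolding partial_flow_def flow_dom_def by blast
qed

lemma pf_interval:
  assumes "partial_flow \<Gamma> \<phi>" "(a, x) \<in> \<Gamma>" "(b, x) \<in> \<Gamma>" "a \<le> s" "s \<le> b"
  shows "(s, x) \<in> \<Gamma>"
proof -
  have "connected (flow_dom \<Gamma> x)" using assms(1) by (simp add: partial_flow_def)
  then have "is_interval (flow_dom \<Gamma> x)" by (simp add: is_interval_connected_1)
  then show ?thesis using assms unfolding is_interval_1 flow_dom_def by blast
qed

lemma pf_cont_orbit:
  assumes "partial_flow \<Gamma> \<phi>"
  shows "continuous_on {t. (t, x) \<in> \<Gamma>} (\<lambda>t. \<phi> t x)"
proof -
  have "continuous_on {t. (t, x) \<in> \<Gamma>} ((\<lambda>(t, x). \<phi> t x) \<circ> (\<lambda>t. (t, x)))"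
    by (rule continuous_on_compose) (auto intro!: continuous_intros continuous_on_subset[OF pf_cont[OF assms]])
  then show ?thesis by (simp add: o_def)
qed

lemma pf_open_slice:
  assumes "partial_flow \<Gamma> \<phi>" "open W"
  shows "open {t. (t, x) \<in> \<Gamma> \<and> \<phi> t x \<in> W}"
proof -
  have o: "open (\<Gamma> \<inter> (\<lambda>(t, x). \<phi> t x) -` W)"
    by (rule continuous_open_preimage[OF pf_cont[OF assms(1)] pf_open[OF assms(1)] assms(2)])
  have "continuous_on UNIV (\<lambda>t::real. (t, x))" by (intro continuous_intros)
  then have "open ((\<lambda>t::real. (t, x)) -` (\<Gamma> \<inter> (\<lambda>(t, x). \<phi> t x) -` W))"
    by (intro open_vimage o)
  moreover have "(\<lambda>t::real. (t, x)) -` (\<Gamma> \<inter> (\<lambda>(t, x). \<phi> t x) -` W) = {t. (t, x) \<in> \<Gamma> \<and> \<phi> t x \<in> W}"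
    by auto
  ultimately show ?thesis by simp
qed

lemma orbit_deriv:
  assumes pf: "partial_flow \<Gamma> \<phi>" and J: "open J" "t \<in> J"
    and JD: "\<And>s. s \<in> J \<Longrightarrow> (s, x) \<in> \<Gamma> \<and> \<phi> s x \<in> D"
    and ld: "has_lie_deriv \<Gamma> \<phi> D L (\<phi> t x) l"
  shows "((\<lambda>s. L (\<phi> s x)) has_real_derivative l) (at t)"
proof -
  let ?y = "\<phi> t x"
  let ?V = "{s. s + t \<in> J}"
  have tx: "(t, x) \<in> \<Gamma>" using JD J by auto
  have oV: "open ?V"
  proof -
    have "?V = (\<lambda>s. s + t) -` J" by auto
    moreover have "continuous_on UNIV (\<lambda>s::real. s + t)" by (intro continuous_intros)
    ultimately show ?thesis using J by (simp add: open_vimage)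
  qed
  have 0: "0 \<in> ?V" using J by simp
  have sub: "?V \<subseteq> {s. (s, ?y) \<in> \<Gamma> \<and> \<phi> s ?y \<in> D}"
  proof
    fix s assume "s \<in> ?V"
    then have "(s + t, x) \<in> \<Gamma>" "\<phi> (s + t) x \<in> D" using JD by auto
    then show "s \<in> {s. (s, ?y) \<in> \<Gamma> \<and> \<phi> s ?y \<in> D}"
      using pf_shift[OF pf tx] pf_comp[OF pf tx] by auto
  qed
  have "((\<lambda>s. (L (\<phi> s ?y) - L ?y) / s) \<longlongrightarrow> l) (at 0 within ?V)"
    using ld unfolding has_lie_deriv_def by (rule tendsto_within_subset) (rule sub)
  then have lim: "((\<lambda>s. (L (\<phi> s ?y) - L ?y) / s) \<longlongrightarrow> l) (at 0)"
    by (subst (asm) tendsto_within_open[OF 0 oV])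
  have ev: "eventually (\<lambda>s. (L (\<phi> s ?y) - L ?y) / s = (L (\<phi> (t + s) x) - L (\<phi> t x)) / s) (at 0)"
  proof -
    have "eventually (\<lambda>s. s \<in> ?V) (at 0)"
      using oV 0 eventually_at_topological by blast
    then show ?thesis
    proof (rule eventually_mono)
      fix s assume "s \<in> ?V"
      then have "(s + t, x) \<in> \<Gamma>" using JD by auto
      then show "(L (\<phi> s ?y) - L ?y) / s = (L (\<phi> (t + s) x) - L (\<phi> t x)) / s"
        using pf_comp[OF pf tx] by (simp add: add.commute)
    qed
  qed
  show ?thesis unfolding DERIV_def using tendsto_cong[OF ev] lim by simp
qed



lemma ode_zero:
  fixes k k1 :: "real \<Rightarrow> real"
  assumes r: "r > 0"
    and d1: "\<And>s. \<bar>s\<bar> < r \<Longrightarrow> (k has_real_derivative k1 s) (at s)"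
    and d2: "\<And>s. \<bar>s\<bar> < r \<Longrightarrow> (k1 has_real_derivative k s) (at s)"
    and i: "k 0 = 0" "k1 0 = 0"
    and s: "\<bar>s\<bar> < r"
  shows "k s = 0"
proof -
  define u where "u s = (k s + k1 s) * exp (- s)" for s
  define w where "w s = (k s - k1 s) * exp s" for s
  have du: "(u has_real_derivative 0) (at s)" if "\<bar>s\<bar> < r" for s
  proof -
    have a: "(k has_real_derivative k1 s) (at s)" "(k1 has_real_derivative k s) (at s)" by (rule d1[OF that], rule d2[OF that])
    have "(u has_real_derivative ((k1 s + k s) * exp (- s) + (k s + k1 s) * (exp (- s) * (-1)))) (at s)"
      unfolding u_def using a by (auto intro!: derivative_eq_intros)
    then show ?thesis by (simp add: algebra_simps)
  qed
  have dw: "(w has_real_derivative 0) (at s)" if "\<bar>s\<bar> < r" for s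
  proof -
    have a: "(k has_real_derivative k1 s) (at s)" "(k1 has_real_derivative k s) (at s)" by (rule d1[OF that], rule d2[OF that])
    have "(w has_real_derivative ((k1 s - k s) * exp s + (k s - k1 s) * (exp s * 1))) (at s)"
      unfolding w_def using a by (auto intro!: derivative_eq_intros)
    then show ?thesis by (simp add: algebra_simps)
  qed
  have const: "g s = g 0" if dg: "\<And>s. \<bar>s\<bar> < r \<Longrightarrow> (g has_real_derivative 0) (at s)" for g :: "real \<Rightarrow> real"
  proof -
    have ic: "isCont g x" if "\<bar>x\<bar> < r" for x using dg[OF that] by (rule DERIV_isCont)
    have c: "continuous_on {a..b} g" if "\<bar>a\<bar> < r" "\<bar>b\<bar> < r" for a b
      using that by (intro continuous_at_imp_continuous_on ballI ic) auto
    show ?thesis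
    proof (cases "s < 0")
      case True
      have "g 0 = g s"
        by (rule DERIV_isconst2[of s 0 g 0]) (use True s c dg in auto)
      then show ?thesis by simp
    next
      case False
      show ?thesis
      proof (cases "s = 0")
        case False
        with \<open>\<not> s < 0\<close> have "0 < s" by simp
        then show ?thesis
          by (intro DERIV_isconst2[of 0 s g s]) (use s c dg in auto)
      qed simp
    qed
  qed
  have "u s = u 0" by (rule const) (rule du)
  moreover have "w s = w 0" by (rule const) (rule dw)
  ultimately have "k s + k1 s = 0" "k s - k1 s = 0" using i by (auto simp: u_def w_def)
  then show ?thesis by simp
qed

locale cset =
  fixes \<Gamma> :: "(real \<times> 'a::metric_space) set"
    and \<phi> :: "real \<Rightarrow> 'a \<Rightarrow> 'a"
    and \<Lambda> N :: "'a set"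
    and L1 L1' :: "'a \<Rightarrow> real"
    and \<delta> :: real
  assumes flow: "partial_flow \<Gamma> \<phi>"
    and inv: "flow_invariant \<Gamma> \<phi> \<Lambda>"
    and Ncomp: "compact N" and LamN: "\<Lambda> \<subseteq> interior N"
    and L1c: "continuous_on N L1"
    and L1z: "\<And>x. x \<in> \<Lambda> \<Longrightarrow> L1 x = 0"
    and L1p: "\<And>x. x \<in> N - \<Lambda> \<Longrightarrow> L1 x > 0"
    and ld1: "\<And>x. x \<in> N \<Longrightarrow> has_lie_deriv \<Gamma> \<phi> N L1 x (L1' x)"
    and ld2: "\<And>x. x \<in> N \<Longrightarrow> has_lie_deriv \<Gamma> \<phi> N L1' x (L1 x)"
    and dpos: "\<delta> > 0"
    and Bsub: "{x\<in>N. L1 x \<le> \<delta>} \<subseteq> interior N"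
begin

abbreviation "B \<equiv> {x\<in>N. L1 x \<le> \<delta>}"
abbreviation "D \<equiv> B - \<Lambda>"

lemma LamN': "\<Lambda> \<subseteq> N" using LamN interior_subset by blast

lemma L1nn: "x \<in> N \<Longrightarrow> L1 x \<ge> 0"
  using L1z L1p by (cases "x \<in> \<Lambda>") (auto intro: less_imp_le)

lemma Nclosed: "closed N" using Ncomp compact_imp_closed by blast

lemma Bclosed: "closed B"
proof -
  have "closed (N \<inter> L1 -` {..\<delta>})"
    by (rule continuous_closed_preimage[OF L1c Nclosed]) auto
  moreover have "N \<inter> L1 -` {..\<delta>} = B" by auto
  ultimately show ?thesis by simp
qed

lemma Bcomp: "compact B"
proof -
  have "compact (N \<inter> B)" by (rule compact_Int_closed[OF Ncomp Bclosed])
  moreover have "N \<inter> B = B" by auto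
  ultimately show ?thesis by simp
qed

lemma Lamclosed: "closed \<Lambda>"
proof -
  have "closed (N \<inter> L1 -` {0})"
    by (rule continuous_closed_preimage[OF L1c Nclosed]) auto
  moreover have "N \<inter> L1 -` {0} = \<Lambda>" using L1z L1p LamN' by force
  ultimately show ?thesis by simp
qed

lemma LamB: "\<Lambda> \<subseteq> B" using LamN' L1z dpos by fastforce

lemma intB: "x \<in> interior N \<Longrightarrow> L1 x < \<delta> \<Longrightarrow> x \<in> interior B"
proof -
  assume x: "x \<in> interior N" "L1 x < \<delta>"
  have c: "continuous_on (interior N) L1" using L1c interior_subset continuous_on_subset by blast
  have o: "open (interior N \<inter> L1 -` {..<\<delta>})"
    by (rule continuous_open_preimage[OF c]) auto
  have "interior N \<inter> L1 -` {..<\<delta>} \<subseteq> B" using interior_subset by fastforce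
  then have "interior N \<inter> L1 -` {..<\<delta>} \<subseteq> interior B" using o interior_maximal by blast
  then show ?thesis using x by auto
qed

lemma frontierB: "x \<in> frontier B \<Longrightarrow> x \<in> B \<and> L1 x = \<delta>"
proof -
  assume x: "x \<in> frontier B"
  then have xB: "x \<in> B" using Bclosed frontier_subset_closed by blast
  then have "x \<in> interior N" using Bsub by blast
  moreover have "x \<notin> interior B" using x by (simp add: frontier_def)
  ultimately have "\<not> L1 x < \<delta>" using intB by blast
  then show ?thesis using xB by auto
qed

lemma notfrontier_int: "x \<in> B \<Longrightarrow> x \<notin> frontier B \<Longrightarrow> x \<in> interior B"
  using Bclosed closure_closed by (auto simp: frontier_def)

lemma lam_inv: "x \<in> \<Lambda> \<Longrightarrow> (t, x) \<in> \<Gamma> \<Longrightarrow> \<phi> t x \<in> \<Lambda>"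
  using inv by (auto simp: flow_invariant_def flow_dom_def)

lemma nlam_inv: "x \<notin> \<Lambda> \<Longrightarrow> (t, x) \<in> \<Gamma> \<Longrightarrow> \<phi> t x \<notin> \<Lambda>"
proof
  assume x: "x \<notin> \<Lambda>" "(t, x) \<in> \<Gamma>" "\<phi> t x \<in> \<Lambda>"
  have "(-t, \<phi> t x) \<in> \<Gamma>" using pf_shift[OF flow x(2)] pf_zero[OF flow] by simp
  then have "\<phi> (-t) (\<phi> t x) \<in> \<Lambda>" using lam_inv x(3) by blast
  moreover have "\<phi> (-t) (\<phi> t x) = x" using pf_comp[OF flow x(2), of "-t"] pf_zero[OF flow] pf_id[OF flow] by simp
  ultimately show False using x by simp
qed

lemma tube: "\<exists>t0>0. \<forall>y\<in>B. \<forall>s. \<bar>s\<bar> < 2 * t0 \<longrightarrow> (s, y) \<in> \<Gamma> \<and> \<phi> s y \<in> interior N"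
proof -
  let ?G = "\<Gamma> \<inter> (\<lambda>(t, x). \<phi> t x) -` interior N"
  have oG: "open ?G"
    by (rule continuous_open_preimage[OF pf_cont[OF flow] pf_open[OF flow]]) auto
  have cS: "compact ({0::real} \<times> B)" using Bcomp by (simp add: compact_Times)
  have sub: "{0::real} \<times> B \<subseteq> \<Union>{?G}" using Bsub pf_zero[OF flow] pf_id[OF flow] by auto
  obtain e where e: "0 < e" "\<And>p. p \<in> {0::real} \<times> B \<Longrightarrow> \<exists>G\<in>{?G}. ball p e \<subseteq> G"
    using Heine_Borel_lemma[OF cS sub] oG by blast
  have "\<forall>y\<in>B. \<forall>s. \<bar>s\<bar> < 2 * (e/2) \<longrightarrow> (s, y) \<in> \<Gamma> \<and> \<phi> s y \<in> interior N"
  proof (intro ballI allI impI)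
    fix y s assume y: "y \<in> B" and s: "\<bar>s\<bar> < 2 * (e/2)"
    have "ball (0, y) e \<subseteq> ?G" using e(2)[of "(0,y)"] y by auto
    moreover have "(s, y) \<in> ball (0, y) e" using s by (simp add: dist_Pair_Pair dist_real_def)
    ultimately show "(s, y) \<in> \<Gamma> \<and> \<phi> s y \<in> interior N" by auto
  qed
  then show ?thesis using e(1) by (intro exI[of _ "e/2"]) auto
qed

end


context cset begin

definition "T0 = (SOME t0. t0 > 0 \<and> (\<forall>y\<in>B. \<forall>s. \<bar>s\<bar> < 2 * t0 \<longrightarrow> (s, y) \<in> \<Gamma> \<and> \<phi> s y \<in> interior N))"

lemma T0: "T0 > 0" "\<And>y s. y \<in> B \<Longrightarrow> \<bar>s\<bar> < 2 * T0 \<Longrightarrow> (s, y) \<in> \<Gamma> \<and> \<phi> s y \<in> interior N"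
  using someI_ex[OF tube] unfolding T0_def[symmetric] by auto

definition "hh y t = L1 y * cosh t + L1' y * sinh t"
definition "hdv y t = L1 y * sinh t + L1' y * cosh t"

lemma hh_shift: "hh y c * cosh r + hdv y c * sinh r = hh y (c + r)"
  by (simp add: hh_def hdv_def cosh_add sinh_add algebra_simps)
lemma hdv_shift: "hh y c * sinh r + hdv y c * cosh r = hdv y (c + r)"
  by (simp add: hh_def hdv_def cosh_add sinh_add algebra_simps)

lemma local_formula:
  assumes y: "y \<in> B" and s: "\<bar>s\<bar> < 2 * T0"
  shows "L1 (\<phi> s y) = hh y s \<and> L1' (\<phi> s y) = hdv y s"
proof -
  define k where "k s = L1 (\<phi> s y) - hh y s" for s
  define k1 where "k1 s = L1' (\<phi> s y) - hdv y s" for s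
  have JD: "(s, y) \<in> \<Gamma> \<and> \<phi> s y \<in> N" if "s \<in> {s. \<bar>s\<bar> < 2 * T0}" for s
    using T0(2)[OF y, of s] that interior_subset by auto
  have oJ: "open {s::real. \<bar>s\<bar> < 2 * T0}"
    using open_ball[of "0::real" "2*T0"] by (simp add: ball_def dist_real_def)
  have d1: "(k has_real_derivative k1 s) (at s)" if "\<bar>s\<bar> < 2 * T0" for s
  proof -
    have "((\<lambda>s. L1 (\<phi> s y)) has_real_derivative L1' (\<phi> s y)) (at s)"
      by (rule orbit_deriv[OF flow oJ _ JD]) (use that JD in \<open>auto intro: ld1\<close>)
    then show ?thesis unfolding k_def k1_def hh_def hdv_def
      by (auto intro!: derivative_eq_intros)
  qed
  have d2: "(k1 has_real_derivative k s) (at s)" if "\<bar>s\<bar> < 2 * T0" for s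
  proof -
    have "((\<lambda>s. L1' (\<phi> s y)) has_real_derivative L1 (\<phi> s y)) (at s)"
      by (rule orbit_deriv[OF flow oJ _ JD]) (use that JD in \<open>auto intro: ld2\<close>)
    then show ?thesis unfolding k_def k1_def hh_def hdv_def
      by (auto intro!: derivative_eq_intros)
  qed
  have i: "k 0 = 0" "k1 0 = 0" by (auto simp: k_def k1_def hh_def hdv_def pf_id[OF flow])
  have r: "2 * T0 > 0" using T0 by simp
  have "k s = 0" by (rule ode_zero[OF r d1 d2 i s])
  moreover have "k1 s = 0" by (rule ode_zero[OF r d2 d1 i(2,1) s])
  ultimately show ?thesis by (simp add: k_def k1_def)
qed

lemma continuation:
  assumes y: "y \<in> B" and e: "e = 1 \<or> e = -1" and b: "b \<ge> 0"
    and hb: "\<And>s. 0 \<le> s \<Longrightarrow> s \<le> b \<Longrightarrow> hh y (e * s) \<le> \<delta>"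
    and s: "0 \<le> s" "s \<le> b"
  shows "(e * s, y) \<in> \<Gamma> \<and> \<phi> (e * s) y \<in> B \<and> L1 (\<phi> (e * s) y) = hh y (e * s) \<and> L1' (\<phi> (e * s) y) = hdv y (e * s)"
proof -
  let ?P = "\<lambda>s. (e * s, y) \<in> \<Gamma> \<and> \<phi> (e * s) y \<in> B \<and> L1 (\<phi> (e * s) y) = hh y (e * s) \<and> L1' (\<phi> (e * s) y) = hdv y (e * s)"
  have ind: "\<forall>s. 0 \<le> s \<and> s \<le> min b (real n * T0) \<longrightarrow> ?P s" for n
  proof (induction n)
    case 0
    then show ?case using y by (auto simp: pf_zero[OF flow] pf_id[OF flow] hh_def hdv_def)
  next
    case (Suc n)
    let ?c = "min b (real n * T0)"
    have c0: "0 \<le> ?c" using b T0 by auto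
    have Pc: "?P ?c" using Suc.IH[rule_format, of ?c] c0 by linarith
    define z where "z = \<phi> (e * ?c) y"
    have zB: "z \<in> B" using Pc by (simp add: z_def)
    have ecG: "(e * ?c, y) \<in> \<Gamma>" using Pc by simp
    show ?case
    proof (intro allI impI)
      fix s assume s: "0 \<le> s \<and> s \<le> min b (real (Suc n) * T0)"
      show "?P s"
      proof (cases "s \<le> ?c")
        case True then show ?thesis using Suc.IH s by auto
      next
        case False
        define r where "r = e * (s - ?c)"
        have rs: "r + e * ?c = e * s" by (simp add: r_def algebra_simps)
        have cn: "?c = real n * T0" using False s by auto
        have "\<bar>r\<bar> \<le> T0" using False s e cn by (auto simp: r_def algebra_simps)
        then have r2: "\<bar>r\<bar> < 2 * T0" using T0 by simp
        have rz: "(r, z) \<in> \<Gamma>" "\<phi> r z \<in> interior N" using T0(2)[OF zB r2] by auto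
        have G: "(e * s, y) \<in> \<Gamma>" using pf_shift[OF flow ecG] rz(1) rs by (simp add: z_def)
        have comp: "\<phi> r z = \<phi> (e * s) y" using pf_comp[OF flow ecG] G rs by (simp add: z_def)
        have lf: "L1 (\<phi> r z) = hh z r" "L1' (\<phi> r z) = hdv z r" using local_formula[OF zB r2] by auto
        have Lz: "L1 z = hh y (e * ?c)" "L1' z = hdv y (e * ?c)" using Pc by (simp_all add: z_def)
        have rs': "e * ?c + r = e * s" using rs by simp
        have hz: "hh z r = hh y (e * s)" "hdv z r = hdv y (e * s)"
          unfolding hh_def[of z] hdv_def[of z] Lz
          using hh_shift[of y "e * ?c" r] hdv_shift[of y "e * ?c" r] rs' by simp_all
        have "\<phi> (e * s) y \<in> N" using rz(2) interior_subset comp by auto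
        moreover have "hh y (e * s) \<le> \<delta>" using hb s by auto
        ultimately show ?thesis using G comp lf hz by auto
      qed
    qed
  qed
  obtain n where n: "b \<le> real n * T0"
  proof -
    obtain n where "b / T0 \<le> real n" using real_arch_simple by blast
    then have "b \<le> real n * T0" using T0 by (simp add: field_simps)
    then show ?thesis using that by blast
  qed
  then show ?thesis using ind[of n] s by auto
qed

end


lemma cosh_exp: "cosh (x::real) = (exp x + exp (-x)) / 2"
  using cosh_plus_sinh[of x] cosh_minus_sinh[of x] by simp
lemma sinh_exp: "sinh (x::real) = (exp x - exp (-x)) / 2"
  using cosh_plus_sinh[of x] cosh_minus_sinh[of x] by simp

lemma exit_alg:
  fixes p m \<delta> :: real
  assumes p: "p > 0" and m: "m \<ge> 0" and pm: "p + m \<le> 2 * \<delta>"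
  defines "S \<equiv> sqrt (\<delta>\<^sup>2 - p * m)"
  defines "\<tau> \<equiv> ln ((\<delta> + S) / p)"
  shows "\<tau> \<ge> 0" "(p * exp \<tau> + m * exp (- \<tau>)) / 2 = \<delta>"
    "\<And>t. t \<ge> 0 \<Longrightarrow> (p * exp t + m * exp (- t)) / 2 \<le> \<delta> \<longleftrightarrow> t \<le> \<tau>"
proof -
  have d: "\<delta> > 0" using p m pm by simp
  have "p * m \<le> \<delta>\<^sup>2"
  proof -
    have "4 * (p * m) \<le> (p + m)\<^sup>2" using sum_squares_ge_zero[of "p - m" 0] by (simp add: power2_eq_square algebra_simps)
    also have "\<dots> \<le> (2 * \<delta>)\<^sup>2" using pm p m by (intro power_mono) auto
    finally show ?thesis by (simp add: power2_eq_square)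
  qed
  then have S0: "S \<ge> 0" and S2: "S\<^sup>2 = \<delta>\<^sup>2 - p * m" by (auto simp: S_def)
  define up where "up = (\<delta> + S) / p"
  define um where "um = (\<delta> - S) / p"
  have upos: "up > 0" unfolding up_def using p d S0 by (intro divide_pos_pos) auto
  have fact: "p * u\<^sup>2 - 2 * \<delta> * u + m = p * (u - up) * (u - um)" for u
  proof -
    have "p * (u - up) * (u - um) = p * u\<^sup>2 - (\<delta> + S + (\<delta> - S)) * u + (\<delta> + S) * (\<delta> - S) / p"
      using p by (simp add: up_def um_def field_simps power2_eq_square)
    also have "(\<delta> + S) * (\<delta> - S) = p * m" using S2 by (simp add: power2_eq_square algebra_simps)
    finally show ?thesis using p by simp
  qed
  have "p * (1 - up) * (1 - um) \<le> 0" using fact[of 1] pm by simp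
  moreover have "um \<le> up" using S0 p by (simp add: up_def um_def divide_right_mono)
  ultimately have ord: "um \<le> 1" "1 \<le> up" using p
    by (auto simp: mult_le_0_iff zero_le_mult_iff) 
  have tau: "\<tau> = ln up" by (simp add: \<tau>_def up_def)
  show "\<tau> \<ge> 0" using ord upos tau by simp
  have e: "exp \<tau> = up" using upos tau by simp
  have "m * exp (- \<tau>) = \<delta> - S"
  proof -
    have "m * exp (- \<tau>) = m / up" using e by (simp add: exp_minus field_simps)
    also have "\<dots> = m * p / (\<delta> + S)" using p by (simp add: up_def)
    also have "m * p = (\<delta> + S) * (\<delta> - S)" using S2 by (simp add: power2_eq_square algebra_simps)
    also have "(\<delta> + S) * (\<delta> - S) / (\<delta> + S) = \<delta> - S" using d S0 by simp
    finally show ?thesis .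
  qed
  then show "(p * exp \<tau> + m * exp (- \<tau>)) / 2 = \<delta>" using e p by (simp add: up_def)
  fix t :: real assume t: "t \<ge> 0"
  define u where "u = exp t"
  have u1: "u \<ge> 1" using t by (simp add: u_def)
  have "(p * exp t + m * exp (- t)) / 2 \<le> \<delta> \<longleftrightarrow> p * u\<^sup>2 - 2 * \<delta> * u + m \<le> 0"
  proof -
    have "(p * exp t + m * exp (- t)) / 2 - \<delta> = (p * u\<^sup>2 - 2 * \<delta> * u + m) / (2 * u)"
      using u1 by (simp add: u_def exp_minus field_simps power2_eq_square)
    moreover have "2 * u > 0" using u1 by simp
    moreover have "(q::real) / (2 * u) \<le> 0 \<longleftrightarrow> q \<le> 0" if "2 * u > 0" for q
      using that by (simp add: divide_le_0_iff)
    ultimately show ?thesis by smt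
  qed
  also have "\<dots> \<longleftrightarrow> u \<le> up"
  proof
    assume "p * u\<^sup>2 - 2 * \<delta> * u + m \<le> 0"
    then have "p * (u - up) * (u - um) \<le> 0" using fact by simp
    show "u \<le> up"
    proof (rule ccontr)
      assume "\<not> u \<le> up"
      then have "u - up > 0" "u - um > 0" using u1 ord by auto
      then have "p * (u - up) * (u - um) > 0" using p by simp
      then show False using \<open>p * (u - up) * (u - um) \<le> 0\<close> by simp
    qed
  next
    assume "u \<le> up"
    then have "p * (u - up) * (u - um) \<le> 0" using p u1 ord
      by (simp add: mult_le_0_iff zero_le_mult_iff)
    then show "p * u\<^sup>2 - 2 * \<delta> * u + m \<le> 0" using fact by simp
  qed
  also have "\<dots> \<longleftrightarrow> t \<le> \<tau>" using upos by (simp add: u_def tau ln_ge_iff)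
  finally show "(p * exp t + m * exp (- t)) / 2 \<le> \<delta> \<longleftrightarrow> t \<le> \<tau>" .
qed



context cset begin

lemma hh_e: "e = 1 \<or> e = -1 \<Longrightarrow> hh y (e * s) = L1 y * cosh s + e * L1' y * sinh s"
  by (auto simp: hh_def)

lemma hh_exp_e: "e = 1 \<or> e = -1 \<Longrightarrow>
   hh y (e * s) = ((L1 y + e * L1' y) * exp s + (L1 y - e * L1' y) * exp (- s)) / 2"
  by (auto simp: hh_def cosh_exp sinh_exp field_simps)

lemma v_bound_e:
  assumes y: "y \<in> B" and e: "e = 1 \<or> e = -1"
  shows "L1 y + e * L1' y \<ge> 0"
proof (rule ccontr)
  assume neg: "\<not> L1 y + e * L1' y \<ge> 0"
  let ?A = "L1 y" and ?w = "L1 y + e * L1' y"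
  have A0: "?A \<ge> 0" using y L1nn by auto
  have Ad: "?A \<le> \<delta>" using y by auto
  have bnd: "hh y (e * s) \<le> ?A + ?w * sinh s" if "s \<ge> 0" for s
  proof -
    have "hh y (e * s) = ?A * (cosh s - sinh s) + ?w * sinh s" unfolding hh_e[OF e] by (simp add: algebra_simps)
    also have "?A * (cosh s - sinh s) \<le> ?A"
      using A0 cosh_minus_sinh[of s] that by (simp add: mult_left_le)
    finally show ?thesis by simp
  qed
  define s where "s = arsinh (?A / (- ?w) + 1)"
  have sh: "sinh s = ?A / (- ?w) + 1" by (simp add: s_def)
  have shp: "sinh s > 0" using sh A0 neg by (simp add: add_nonneg_pos)
  then have s0: "s \<ge> 0" by simp
  have hb: "hh y (e * s') \<le> \<delta>" if "0 \<le> s'" "s' \<le> s" for s'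
  proof -
    have "?w * sinh s' \<le> 0" using neg that by (simp add: mult_nonpos_nonneg)
    then show ?thesis using bnd[of s'] that Ad by simp
  qed
  have c: "\<phi> (e * s) y \<in> B \<and> L1 (\<phi> (e * s) y) = hh y (e * s)"
    using continuation[OF y e s0 hb _ _ , of s] s0 by auto
  have "hh y (e * s) \<le> ?A + ?w * (?A / (- ?w) + 1)" using bnd[OF s0] sh by simp
  also have "\<dots> = ?w" using neg by (simp add: field_simps)
  finally have "L1 (\<phi> (e * s) y) < 0" using c neg by simp
  moreover have "L1 (\<phi> (e * s) y) \<ge> 0" by (rule L1nn) (use c in auto)
  ultimately show False by simp
qed

lemma v_bound: "y \<in> B \<Longrightarrow> \<bar>L1' y\<bar> \<le> L1 y"
  using v_bound_e[of y 1] v_bound_e[of y "-1"] by auto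

lemma orbit_cont_at: "isCont (\<lambda>t. \<phi> t y) 0"
proof -
  have o: "open {t. (t, y) \<in> \<Gamma> \<and> \<phi> t y \<in> UNIV}" by (rule pf_open_slice[OF flow]) auto
  have "0 \<in> interior {t. (t, y) \<in> \<Gamma>}" using o pf_zero[OF flow] by (simp add: interior_open)
  then show ?thesis using continuous_on_interior[OF pf_cont_orbit[OF flow]] by blast
qed

lemma frontier_char:
  assumes y: "y \<in> B" and Ly: "L1 y = \<delta>"
  shows "y \<in> frontier B"
proof -
  define e :: real where "e = (if L1' y \<ge> 0 then 1 else -1)"
  have e: "e = 1 \<or> e = -1" by (simp add: e_def)
  have out: "\<phi> (e * s) y \<notin> B" if "0 < s" "s < T0" for s
  proof -
    have "\<bar>e * s\<bar> < 2 * T0" using that e T0 by auto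
    then have "L1 (\<phi> (e * s) y) = hh y (e * s)" using local_formula[OF y] by auto
    also have "\<dots> = \<delta> * cosh s + e * L1' y * sinh s" using hh_e[OF e] Ly by simp
    also have "\<dots> > \<delta>"
    proof -
      have "e * L1' y \<ge> 0" by (simp add: e_def)
      then have "e * L1' y * sinh s \<ge> 0" using that by simp
      moreover have "cosh s > 1" using cosh_real_strict_mono[of 0 s] that by simp
      then have "\<delta> * cosh s > \<delta>" using dpos by simp
      ultimately show ?thesis by simp
    qed
    finally show ?thesis by simp
  qed
  have "y \<notin> interior B"
  proof
    assume "y \<in> interior B"
    then obtain r where r0: "r > 0" "ball y r \<subseteq> interior B"
      using open_interior[of B] unfolding open_contains_ball by blast
    then have r: "r > 0" "ball y r \<subseteq> B" using interior_subset[of B] by auto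
    obtain d where d0: "d > 0" and d1: "\<forall>t. t \<noteq> 0 \<and> dist t 0 < d \<longrightarrow> dist (\<phi> t y) (\<phi> 0 y) < r"
      using metric_LIM_D[OF orbit_cont_at[of y, unfolded isCont_def] r(1)] by blast
    have d: "d > 0" "\<And>t. t \<noteq> 0 \<Longrightarrow> \<bar>t\<bar> < d \<Longrightarrow> dist (\<phi> t y) y < r"
      using d0 d1 pf_id[OF flow] by (auto simp: dist_real_def)
    define s where "s = min d T0 / 2"
    have s: "0 < s" "s < T0" "s < d" using d T0 by (auto simp: s_def)
    have "e * s \<noteq> 0" "\<bar>e * s\<bar> < d" using s e by auto
    then have "\<phi> (e * s) y \<in> ball y r" using d(2)[of "e * s"] by (simp add: dist_commute)
    then show False using out[OF s(1,2)] r by auto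
  qed
  moreover have "y \<in> closure B" using y closure_subset[of B] by blast
  ultimately show ?thesis by (simp add: frontier_def)
qed

end


context cset begin

definition "SS y = sqrt (\<delta>\<^sup>2 - (L1 y)\<^sup>2 + (L1' y)\<^sup>2)"
definition "ex e y = ln ((\<delta> + SS y) / (L1 y + e * L1' y))"

lemma SS_e: "e = 1 \<or> e = -1 \<Longrightarrow> SS y = sqrt (\<delta>\<^sup>2 - (L1 y + e * L1' y) * (L1 y - e * L1' y))"
  by (auto simp: SS_def power2_eq_square algebra_simps)

lemma exit_props:
  assumes y: "y \<in> B" and e: "e = 1 \<or> e = -1" and p: "L1 y + e * L1' y > 0"
  shows "ex e y \<ge> 0"
    "\<And>t. t \<ge> 0 \<Longrightarrow> hh y (e * t) \<le> \<delta> \<longleftrightarrow> t \<le> ex e y"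
    "\<And>s. 0 \<le> s \<Longrightarrow> s \<le> ex e y \<Longrightarrow> (e * s, y) \<in> \<Gamma> \<and> \<phi> (e * s) y \<in> B \<and>
         L1 (\<phi> (e * s) y) = hh y (e * s) \<and> L1' (\<phi> (e * s) y) = hdv y (e * s)"
    "hh y (e * ex e y) = \<delta>"
    "\<phi> (e * ex e y) y \<in> frontier B"
proof -
  let ?p = "L1 y + e * L1' y" and ?m = "L1 y - e * L1' y"
  have m: "?m \<ge> 0" using v_bound_e[OF y, of "-e"] e by auto
  have pm: "?p + ?m \<le> 2 * \<delta>" using y by auto
  have exd: "ex e y = ln ((\<delta> + sqrt (\<delta>\<^sup>2 - ?p * ?m)) / ?p)" by (simp add: ex_def SS_e[OF e])
  note A = exit_alg[OF p m pm, folded exd]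
  show ex0: "ex e y \<ge> 0" by (rule A(1))
  show iff: "\<And>t. t \<ge> 0 \<Longrightarrow> hh y (e * t) \<le> \<delta> \<longleftrightarrow> t \<le> ex e y"
    unfolding hh_exp_e[OF e] by (rule A(3))
  show hex: "hh y (e * ex e y) = \<delta>" unfolding hh_exp_e[OF e] by (rule A(2))
  show c: "\<And>s. 0 \<le> s \<Longrightarrow> s \<le> ex e y \<Longrightarrow> (e * s, y) \<in> \<Gamma> \<and> \<phi> (e * s) y \<in> B \<and>
         L1 (\<phi> (e * s) y) = hh y (e * s) \<and> L1' (\<phi> (e * s) y) = hdv y (e * s)"
    by (rule continuation[OF y e ex0]) (use iff in auto)
  show "\<phi> (e * ex e y) y \<in> frontier B"
    using c[OF ex0 order_refl] hex by (intro frontier_char) auto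
qed

lemma noexit:
  assumes y: "y \<in> B" and e: "e = 1 \<or> e = -1" and p: "L1 y + e * L1' y = 0" and s: "s \<ge> 0"
  shows "(e * s, y) \<in> \<Gamma> \<and> \<phi> (e * s) y \<in> B \<and>
         L1 (\<phi> (e * s) y) = hh y (e * s) \<and> L1' (\<phi> (e * s) y) = hdv y (e * s)"
proof -
  have hb: "hh y (e * s') \<le> \<delta>" if "0 \<le> s'" for s'
  proof -
    have "hh y (e * s') = (L1 y - e * L1' y) * exp (- s') / 2" using hh_exp_e[OF e] p by simp
    also have "\<dots> = L1 y * exp (- s')" using p e by auto
    also have "\<dots> \<le> L1 y" using that L1nn[of y] y by (simp add: mult_left_le)
    finally show ?thesis using y by auto
  qed
  show ?thesis by (rule continuation[OF y e s hb _ _, of s]) (use s in auto)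
qed

end


locale cset2 = cset +
  fixes a f :: "'a \<Rightarrow> real" and c0 :: real
  assumes a_cont: "continuous_on D a"
    and a_pos: "\<And>x. x \<in> D \<Longrightarrow> a x > 0"
    and a_dot: "\<And>x. x \<in> D \<Longrightarrow> has_lie_deriv \<Gamma> \<phi> D a x 0"
    and c0: "c0 > 0" "\<And>x. x \<in> D \<Longrightarrow> c0 \<le> a x"
    and f_cont: "continuous_on (frontier B) f"
begin

definition "P y = ((L1 y + L1' y) / (\<delta> + SS y)) powr a y"
definition "Q y = ((L1 y - L1' y) / (\<delta> + SS y)) powr a y"
definition "Fp y = f (\<phi> (1 * ex 1 y) y)"
definition "Fm y = f (\<phi> ((-1) * ex (-1) y) y)"
definition "Gp y = P y * Fp y"
definition "Gm y = Q y * Fm y"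
definition "al y = (Gp y - (P y)\<^sup>2 * Gm y) / (1 - (P y * Q y)\<^sup>2)"
definition "be y = (Gm y - (Q y)\<^sup>2 * Gp y) / (1 - (P y * Q y)\<^sup>2)"
definition "Lc y = (if y \<in> \<Lambda> then 0 else if P y * Q y = 1 then f y else al y + be y)"
definition "Lc' y = a y * (al y - be y)"

lemma SS_nn: "y \<in> B \<Longrightarrow> SS y \<ge> 0"
proof -
  assume y: "y \<in> B"
  then have "0 \<le> L1 y" "L1 y \<le> \<delta>" using L1nn by auto
  then have "(L1 y)\<^sup>2 \<le> \<delta>\<^sup>2" by (intro power_mono) auto
  then show ?thesis by (simp add: SS_def)
qed
lemma dS: "y \<in> B \<Longrightarrow> \<delta> + SS y > 0" using SS_nn dpos by (simp add: add_pos_nonneg)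

lemma base_e:
  assumes y: "y \<in> B" and e: "e = 1 \<or> e = -1"
  shows "(L1 y + e * L1' y) / (\<delta> + SS y) \<ge> 0"
    "L1 y + e * L1' y > 0 \<Longrightarrow> (L1 y + e * L1' y) / (\<delta> + SS y) = exp (- ex e y)"
proof -
  show "(L1 y + e * L1' y) / (\<delta> + SS y) \<ge> 0" using v_bound_e[OF y e] dS[OF y] by simp
  assume p: "L1 y + e * L1' y > 0"
  have "exp (- ex e y) = inverse ((\<delta> + SS y) / (L1 y + e * L1' y))"
    unfolding ex_def using p dS[OF y] by (simp add: exp_minus)
  then show "(L1 y + e * L1' y) / (\<delta> + SS y) = exp (- ex e y)" by simp
qed

lemma PQ_e:
  assumes y: "y \<in> B" and e: "e = 1 \<or> e = -1"
  defines "R \<equiv> ((L1 y + e * L1' y) / (\<delta> + SS y)) powr a y"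
  shows "R \<ge> 0" "a y > 0 \<Longrightarrow> R \<le> 1"
    "L1 y + e * L1' y > 0 \<Longrightarrow> R = exp (- a y * ex e y)"
    "L1 y + e * L1' y = 0 \<Longrightarrow> R = 0"
proof -
  show "R \<ge> 0" by (simp add: R_def)
  show "L1 y + e * L1' y > 0 \<Longrightarrow> R = exp (- a y * ex e y)"
    unfolding R_def using base_e[OF y e] by (simp add: exp_powr_real)
  show "L1 y + e * L1' y = 0 \<Longrightarrow> R = 0" by (simp add: R_def)
  assume a: "a y > 0"
  show "R \<le> 1"
  proof (cases "L1 y + e * L1' y > 0")
    case True
    then have "R = exp (- a y * ex e y)" unfolding R_def using base_e[OF y e] by (simp add: exp_powr_real)
    moreover have "ex e y \<ge> 0" using exit_props(1)[OF y e True] .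
    ultimately show ?thesis using a by (simp add: mult_nonneg_nonneg)
  next
    case False
    then have "L1 y + e * L1' y = 0" using v_bound_e[OF y e] by simp
    then show ?thesis by (simp add: R_def)
  qed
qed

lemma P_alt: "P y = ((L1 y + 1 * L1' y) / (\<delta> + SS y)) powr a y" by (simp add: P_def)
lemma Q_alt: "Q y = ((L1 y + (-1) * L1' y) / (\<delta> + SS y)) powr a y" by (simp add: Q_def)

lemma PQ_bounds:
  assumes "y \<in> D"
  shows "0 \<le> P y" "P y \<le> 1" "0 \<le> Q y" "Q y \<le> 1"
  using PQ_e[of y 1] PQ_e[of y "-1"] assms a_pos[OF assms] unfolding P_alt Q_alt by auto

end


context cset2 begin

abbreviation "betw t s \<equiv> (0 \<le> s \<and> s \<le> t) \<or> (t \<le> s \<and> s \<le> (0::real))"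

lemma locality:
  assumes x: "x \<in> D" and t: "\<bar>t\<bar> < 2 * T0" "(t, x) \<in> \<Gamma>" "\<phi> t x \<in> B"
  shows "\<forall>s. betw t s \<longrightarrow> (s, x) \<in> \<Gamma> \<and> \<phi> s x \<in> D"
    "L1 x + 1 * L1' x > 0 \<Longrightarrow> t \<le> ex 1 x"
    "L1 x + (-1) * L1' x > 0 \<Longrightarrow> -t \<le> ex (-1) x"
proof -
  have xB: "x \<in> B" using x by simp
  have L: "L1 (\<phi> t x) = hh x t" using local_formula[OF xB t(1)] by simp
  have inB: "(e * s, x) \<in> \<Gamma> \<and> \<phi> (e * s) x \<in> B"
    if e: "e = 1 \<or> e = -1" and es: "e * t \<ge> 0" and s: "0 \<le> s" "s \<le> e * t" for e s
  proof (cases "L1 x + e * L1' x > 0")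
    case True
    have "hh x (e * (e * t)) \<le> \<delta>" using L t(3) e by auto
    then have "e * t \<le> ex e x" using exit_props(2)[OF xB e True es] by simp
    then show ?thesis using exit_props(3)[OF xB e True s(1)] s by auto
  next
    case False
    then have "L1 x + e * L1' x = 0" using v_bound_e[OF xB e] by simp
    then show ?thesis using noexit[OF xB e _ s(1)] by auto
  qed
  show "\<forall>s. betw t s \<longrightarrow> (s, x) \<in> \<Gamma> \<and> \<phi> s x \<in> D"
  proof (intro allI impI)
    fix s assume s: "betw t s"
    have "(s, x) \<in> \<Gamma> \<and> \<phi> s x \<in> B"
    proof (cases "t \<ge> 0")
      case True
      then show ?thesis using inB[of 1 s] s by auto
    next
      case False
      then show ?thesis using inB[of "-1" "-s"] s by auto
    qed
    then show "(s, x) \<in> \<Gamma> \<and> \<phi> s x \<in> D" using nlam_inv[of x s] x by auto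
  qed
  show "L1 x + 1 * L1' x > 0 \<Longrightarrow> t \<le> ex 1 x"
  proof -
    assume p: "L1 x + 1 * L1' x > 0"
    show "t \<le> ex 1 x"
    proof (cases "t \<ge> 0")
      case True
      have "hh x (1 * t) \<le> \<delta>" using L t(3) by auto
      then show ?thesis using exit_props(2)[OF xB _ p, of t] True by simp
    next
      case False then show ?thesis using exit_props(1)[OF xB _ p] by simp
    qed
  qed
  show "L1 x + (-1) * L1' x > 0 \<Longrightarrow> -t \<le> ex (-1) x"
  proof -
    assume p: "L1 x + (-1) * L1' x > 0"
    show "-t \<le> ex (-1) x"
    proof (cases "t \<le> 0")
      case True
      have "hh x ((-1) * (-t)) \<le> \<delta>" using L t(3) by auto
      then show ?thesis using exit_props(2)[OF xB _ p, of "-t"] True by simp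
    next
      case False then show ?thesis using exit_props(1)[OF xB _ p] by simp
    qed
  qed
qed

lemma a_const:
  assumes x: "x \<in> D" and seg: "\<forall>s. betw t s \<longrightarrow> (s, x) \<in> \<Gamma> \<and> \<phi> s x \<in> D"
  shows "a (\<phi> t x) = a x"
proof (cases "t = 0")
  case True then show ?thesis by (simp add: pf_id[OF flow])
next
  case False
  define lo where "lo = min 0 t"
  define hi where "hi = max 0 t"
  have lh: "lo < hi" using False by (auto simp: lo_def hi_def)
  have inI: "(s, x) \<in> \<Gamma> \<and> \<phi> s x \<in> D" if "lo \<le> s" "s \<le> hi" for s
  proof -
    have "betw t s" using that by (auto simp: lo_def hi_def min_def max_def split: if_splits)
    then show ?thesis using seg by blast
  qed
  let ?g = "\<lambda>s. a (\<phi> s x)"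
  have cont: "continuous_on {lo..hi} ?g"
  proof (rule continuous_on_compose2[OF a_cont])
    show "continuous_on {lo..hi} (\<lambda>s. \<phi> s x)"
      by (rule continuous_on_subset[OF pf_cont_orbit[OF flow]]) (use inI in auto)
    show "(\<lambda>s. \<phi> s x) ` {lo..hi} \<subseteq> D" using inI by auto
  qed
  have der: "(?g has_real_derivative 0) (at s)" if "lo < s" "s < hi" for s
    by (rule orbit_deriv[OF flow, of "{lo<..<hi}" s x D a 0]) (use that inI a_dot in auto)
  have "?g t = ?g lo" by (rule DERIV_isconst2[OF lh cont der]) (auto simp: lo_def hi_def)
  moreover have "?g 0 = ?g lo" by (rule DERIV_isconst2[OF lh cont der]) (auto simp: lo_def hi_def)
  ultimately show ?thesis by (simp add: pf_id[OF flow])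
qed

end


context cset2 begin

definition "Rr e y = ((L1 y + e * L1' y) / (\<delta> + SS y)) powr a y"
definition "Fe e y = f (\<phi> (e * ex e y) y)"

lemma P_Rr: "P y = Rr 1 y" and Q_Rr: "Q y = Rr (-1) y" and Fp_Fe: "Fp y = Fe 1 y" and Fm_Fe: "Fm y = Fe (-1) y"
  by (simp_all add: P_def Q_def Rr_def Fp_def Fm_def Fe_def)

lemma shift_e:
  assumes x: "x \<in> D" and t: "\<bar>t\<bar> < 2 * T0" "(t, x) \<in> \<Gamma>" "\<phi> t x \<in> B"
    and e: "e = 1 \<or> e = -1"
  shows "Rr e (\<phi> t x) = Rr e x * exp (e * a x * t)"
    "Rr e (\<phi> t x) * Fe e (\<phi> t x) = Rr e x * Fe e x * exp (e * a x * t)"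
proof -
  let ?y = "\<phi> t x"
  have xB: "x \<in> B" using x by simp
  note loc = locality[OF x t]
  have ay: "a ?y = a x" by (rule a_const[OF x loc(1)])
  have lf: "L1 ?y = hh x t" "L1' ?y = hdv x t" using local_formula[OF xB t(1)] by auto
  have pe: "L1 ?y + e * L1' ?y = (L1 x + e * L1' x) * exp (e * t)"
  proof -
    have "cosh t + e * sinh t = exp (e * t)" using e cosh_plus_sinh[of t] cosh_minus_sinh[of t] by auto
    moreover have "L1 ?y + e * L1' ?y = (L1 x + e * L1' x) * (cosh t + e * sinh t)"
      using lf e by (auto simp: hh_def hdv_def algebra_simps)
    ultimately show ?thesis by simp
  qed
  have Sy: "SS ?y = SS x"
  proof -
    have "(L1 ?y)\<^sup>2 - (L1' ?y)\<^sup>2 = (L1 x)\<^sup>2 - (L1' x)\<^sup>2"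
    proof -
      have "(L1 ?y)\<^sup>2 - (L1' ?y)\<^sup>2 = (L1 x)\<^sup>2 * (cosh t ^ 2 - sinh t ^ 2) - (L1' x)\<^sup>2 * (cosh t ^ 2 - sinh t ^ 2)"
        using lf by (simp add: hh_def hdv_def power2_eq_square algebra_simps)
      then show ?thesis by (simp add: cosh_square_eq)
    qed
    then show ?thesis unfolding SS_def by (simp add: algebra_simps)
  qed
  have base_nn: "(L1 x + e * L1' x) / (\<delta> + SS x) \<ge> 0" using base_e[OF xB e] by simp
  show R: "Rr e ?y = Rr e x * exp (e * a x * t)"
  proof -
    have "Rr e ?y = ((L1 x + e * L1' x) / (\<delta> + SS x) * exp (e * t)) powr a x"
      unfolding Rr_def pe Sy ay by (simp add: field_simps)
    also have "\<dots> = Rr e x * exp (e * t) powr a x"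
      using base_nn by (subst powr_mult) (auto simp: Rr_def)
    also have "exp (e * t) powr a x = exp (e * a x * t)" by (simp add: exp_powr_real mult_ac)
    finally show ?thesis .
  qed
  show "Rr e ?y * Fe e ?y = Rr e x * Fe e x * exp (e * a x * t)"
  proof (cases "L1 x + e * L1' x > 0")
    case False
    then have "L1 x + e * L1' x = 0" using v_bound_e[OF xB e] by simp
    then have "Rr e x = 0" by (simp add: Rr_def)
    then show ?thesis using R by simp
  next
    case True
    have ex0: "ex e x \<ge> 0" using exit_props(1)[OF xB e True] .
    have G: "(e * ex e x, x) \<in> \<Gamma>" using exit_props(3)[OF xB e True ex0 order_refl] by simp
    have exy: "ex e ?y = ex e x - e * t"
    proof -
      have "ex e ?y = ln ((\<delta> + SS x) / (L1 x + e * L1' x) / exp (e * t))"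
        unfolding ex_def pe Sy by (simp add: field_simps)
      also have "\<dots> = ex e x - e * t"
        using True dS[OF xB] by (simp add: ln_div ex_def ln_mult)
      finally show ?thesis .
    qed
    have ee: "e * ex e ?y = e * ex e x - t" using exy e by (auto simp: algebra_simps)
    have "\<phi> (e * ex e x - t) ?y = \<phi> (e * ex e x - t + t) x"
      by (rule pf_comp[OF flow t(2)]) (simp add: G)
    then have "Fe e ?y = Fe e x" unfolding Fe_def ee by simp
    then show ?thesis using R by simp
  qed
qed

lemma shift:
  assumes x: "x \<in> D" and t: "\<bar>t\<bar> < 2 * T0" "(t, x) \<in> \<Gamma>" "\<phi> t x \<in> B"
  shows "\<phi> t x \<in> D" "a (\<phi> t x) = a x"
    "P (\<phi> t x) = P x * exp (a x * t)" "Q (\<phi> t x) = Q x * exp (- (a x * t))"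
    "Gp (\<phi> t x) = Gp x * exp (a x * t)" "Gm (\<phi> t x) = Gm x * exp (- (a x * t))"
proof -
  note loc = locality[OF x t]
  show "\<phi> t x \<in> D" using loc(1) by auto
  show "a (\<phi> t x) = a x" by (rule a_const[OF x loc(1)])
  have s1: "Rr 1 (\<phi> t x) = Rr 1 x * exp (1 * a x * t)"
    "Rr 1 (\<phi> t x) * Fe 1 (\<phi> t x) = Rr 1 x * Fe 1 x * exp (1 * a x * t)"
    by (rule shift_e[OF x t], simp)+
  have s2: "Rr (-1) (\<phi> t x) = Rr (-1) x * exp ((-1) * a x * t)"
    "Rr (-1) (\<phi> t x) * Fe (-1) (\<phi> t x) = Rr (-1) x * Fe (-1) x * exp ((-1) * a x * t)"
    by (rule shift_e[OF x t], simp)+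
  show "P (\<phi> t x) = P x * exp (a x * t)" unfolding P_Rr using s1(1) by simp
  show "Q (\<phi> t x) = Q x * exp (- (a x * t))" unfolding Q_Rr using s2(1) by simp
  show "Gp (\<phi> t x) = Gp x * exp (a x * t)" unfolding Gp_def P_Rr Fp_Fe using s1(2) by simp
  show "Gm (\<phi> t x) = Gm x * exp (- (a x * t))" unfolding Gm_def Q_Rr Fm_Fe using s2(2) by simp
qed

end


context cset2 begin

lemma tangency:
  assumes x: "x \<in> D" and pq: "P x * Q x = 1"
  shows "P x = 1" "Q x = 1" "L1 x + 1 * L1' x > 0" "L1 x + (-1) * L1' x > 0" "ex 1 x = 0" "ex (-1) x = 0"
proof -
  note b = PQ_bounds[OF x]
  show P1: "P x = 1"
  proof (rule ccontr)
    assume "P x \<noteq> 1" then have "P x < 1" using b by simp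
    moreover have "P x * Q x \<le> P x" using b mult_left_mono[of "Q x" 1 "P x"] by simp
    ultimately have "P x * Q x < 1" by simp
    then show False using pq by simp
  qed
  show Q1: "Q x = 1"
  proof (rule ccontr)
    assume "Q x \<noteq> 1" then have "Q x < 1" using b by simp
    moreover have "P x * Q x \<le> Q x" using b mult_right_mono[of "P x" 1 "Q x"] by simp
    ultimately have "P x * Q x < 1" by simp
    then show False using pq by simp
  qed
  have xB: "x \<in> B" using x by simp
  have ax: "a x > 0" using a_pos[OF x] .
  show p: "L1 x + 1 * L1' x > 0"
  proof (rule ccontr)
    assume "\<not> ?thesis" then have "L1 x + 1 * L1' x = 0" using v_bound_e[OF xB, of 1] by simp
    then have "P x = 0" using PQ_e(4)[OF xB, of 1] by (simp add: P_alt)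
    then show False using P1 by simp
  qed
  show m: "L1 x + (-1) * L1' x > 0"
  proof (rule ccontr)
    assume "\<not> ?thesis" then have "L1 x + (-1) * L1' x = 0" using v_bound_e[OF xB, of "-1"] by simp
    then have "Q x = 0" using PQ_e(4)[OF xB, of "-1"] by (simp add: Q_alt)
    then show False using Q1 by simp
  qed
  have "exp (- a x * ex 1 x) = 1" using PQ_e(3)[OF xB _ p] P1 by (simp add: P_alt)
  then show "ex 1 x = 0" using ax by simp
  have "exp (- a x * ex (-1) x) = 1" using PQ_e(3)[OF xB _ m] Q1 by (simp add: Q_alt)
  then show "ex (-1) x = 0" using ax by simp
qed

lemma lie_trivial:
  assumes x: "x \<in> D" and pq: "P x * Q x = 1"
  shows "has_lie_deriv \<Gamma> \<phi> D F x l"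
proof -
  let ?S = "{t. (t, x) \<in> \<Gamma> \<and> \<phi> t x \<in> D}"
  have "\<not> 0 islimpt ?S"
  proof
    assume "0 islimpt ?S"
    moreover have "2 * T0 > 0" using T0(1) by simp
    ultimately obtain t where t: "t \<in> ?S" "t \<noteq> 0" "dist t 0 < 2 * T0"
      unfolding islimpt_approachable by blast
    have tt: "\<bar>t\<bar> < 2 * T0" "(t, x) \<in> \<Gamma>" "\<phi> t x \<in> B" using t by auto
    have "t \<le> ex 1 x" "-t \<le> ex (-1) x" using locality(2,3)[OF x tt] tangency[OF x pq] by auto
    then show False using tangency[OF x pq] t(2) by simp
  qed
  then have "trivial_limit (at 0 within ?S)" using trivial_limit_within by blast
  then have "at 0 within ?S = bot" unfolding trivial_limit_def .
  then show ?thesis unfolding has_lie_deriv_def by simp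
qed

lemma orbit_values:
  assumes x: "x \<in> D" and pq: "P x * Q x \<noteq> 1"
    and t: "\<bar>t\<bar> < 2 * T0" "(t, x) \<in> \<Gamma>" "\<phi> t x \<in> D"
  shows "Lc (\<phi> t x) = al x * exp (a x * t) + be x * exp (- (a x * t))"
    "Lc' (\<phi> t x) = a x * (al x * exp (a x * t) - be x * exp (- (a x * t)))"
proof -
  let ?y = "\<phi> t x" and ?E = "exp (a x * t)"
  have tB: "\<phi> t x \<in> B" using t by simp
  note sh = shift[OF x t(1,2) tB]
  have E: "exp (- (a x * t)) = inverse ?E" by (simp add: exp_minus)
  have Epos: "?E > 0" by simp
  have pqy: "P ?y * Q ?y = P x * Q x" using sh E by simp
  have EE: "?E * ?E * inverse ?E = ?E" "inverse ?E * inverse ?E * ?E = inverse ?E" using Epos by auto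
  have m1: "(P x * ?E)\<^sup>2 * (Gm x * inverse ?E) = (P x)\<^sup>2 * Gm x * (?E * ?E * inverse ?E)"
    by (simp add: power2_eq_square mult_ac)
  have m2: "(Q x * inverse ?E)\<^sup>2 * (Gp x * ?E) = (Q x)\<^sup>2 * Gp x * (inverse ?E * inverse ?E * ?E)"
    by (simp add: power2_eq_square mult_ac)
  have n1: "Gp ?y - (P ?y)\<^sup>2 * Gm ?y = (Gp x - (P x)\<^sup>2 * Gm x) * ?E"
    unfolding sh(3,5,6) E m1 EE by (simp add: algebra_simps)
  have n2: "Gm ?y - (Q ?y)\<^sup>2 * Gp ?y = (Gm x - (Q x)\<^sup>2 * Gp x) * inverse ?E"
    unfolding sh(4,5,6) E m2 EE by (simp add: algebra_simps)
  have aly: "al ?y = al x * ?E"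
    unfolding al_def pqy n1 by simp
  have bey: "be ?y = be x * exp (- (a x * t))"
    unfolding be_def pqy n2 E by simp
  show "Lc ?y = al x * ?E + be x * exp (- (a x * t))"
    using t(3) pqy pq aly bey by (simp add: Lc_def)
  show "Lc' ?y = a x * (al x * ?E - be x * exp (- (a x * t)))"
    using sh(2) aly bey by (simp add: Lc'_def)
qed

lemma lie_via_fun:
  fixes w :: "real \<Rightarrow> real"
  assumes d: "(w has_real_derivative l) (at 0)" and r: "r > 0"
    and eq: "\<And>t. \<bar>t\<bar> < r \<Longrightarrow> t \<in> S \<Longrightarrow> F t = w t" and F0: "F 0 = w 0"
  shows "((\<lambda>t. (F t - F 0) / t) \<longlongrightarrow> l) (at 0 within S)"
proof -
  have "((\<lambda>t. (w t - w 0) / t) \<longlongrightarrow> l) (at 0)" using d unfolding DERIV_def by simp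
  then have "((\<lambda>t. (w t - w 0) / t) \<longlongrightarrow> l) (at 0 within S)" by (rule tendsto_within_subset) simp
  moreover have "eventually (\<lambda>t. (w t - w 0) / t = (F t - F 0) / t) (at 0 within S)"
    unfolding eventually_at using r eq F0 by (auto simp: dist_real_def intro!: exI[of _ r])
  ultimately show ?thesis by (rule Lim_transform_eventually)
qed

lemma lie_Lc:
  assumes x: "x \<in> D"
  shows "has_lie_deriv \<Gamma> \<phi> D Lc x (Lc' x)" "has_lie_deriv \<Gamma> \<phi> D Lc' x ((a x)\<^sup>2 * Lc x)"
proof -
  consider "P x * Q x = 1" | "P x * Q x \<noteq> 1" by blast
  then have "has_lie_deriv \<Gamma> \<phi> D Lc x (Lc' x) \<and> has_lie_deriv \<Gamma> \<phi> D Lc' x ((a x)\<^sup>2 * Lc x)"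
  proof cases
    case 1 then show ?thesis using lie_trivial[OF x] by blast
  next
    case 2
    define w where "w t = al x * exp (a x * t) + be x * exp (- (a x * t))" for t
    define w1 where "w1 t = a x * (al x * exp (a x * t) - be x * exp (- (a x * t)))" for t
    have dw: "(w has_real_derivative Lc' x) (at 0)"
    proof -
      have "(w has_real_derivative (al x * (exp (a x * 0) * a x) + be x * (exp (- (a x * 0)) * - a x))) (at 0)"
        unfolding w_def by (auto intro!: derivative_eq_intros)
      then show ?thesis by (simp add: Lc'_def algebra_simps)
    qed
    have dw1: "(w1 has_real_derivative (a x)\<^sup>2 * Lc x) (at 0)"
    proof -
      have "(w1 has_real_derivative a x * (al x * (exp (a x * 0) * a x) - be x * (exp (- (a x * 0)) * - a x))) (at 0)"
        unfolding w1_def by (auto intro!: derivative_eq_intros)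
      then show ?thesis using x 2 by (simp add: Lc_def power2_eq_square algebra_simps)
    qed
    have r: "2 * T0 > 0" using T0(1) by simp
    have id: "\<phi> 0 x = x" by (rule pf_id[OF flow])
    have L0: "Lc x = w 0" using x 2 by (simp add: Lc_def w_def)
    have L0': "Lc' x = w1 0" by (simp add: Lc'_def w1_def)
    let ?S = "{t. (t, x) \<in> \<Gamma> \<and> \<phi> t x \<in> D}"
    have A: "has_lie_deriv \<Gamma> \<phi> D Lc x (Lc' x)"
    proof -
      have "((\<lambda>t. (Lc (\<phi> t x) - Lc (\<phi> 0 x)) / t) \<longlongrightarrow> Lc' x) (at 0 within ?S)"
      proof (rule lie_via_fun[OF dw r])
        show "\<And>t. \<bar>t\<bar> < 2 * T0 \<Longrightarrow> t \<in> ?S \<Longrightarrow> Lc (\<phi> t x) = w t"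
          using orbit_values(1)[OF x 2] unfolding w_def by blast
        show "Lc (\<phi> 0 x) = w 0" unfolding id by (rule L0)
      qed
      then show ?thesis unfolding has_lie_deriv_def id .
    qed
    have B: "has_lie_deriv \<Gamma> \<phi> D Lc' x ((a x)\<^sup>2 * Lc x)"
    proof -
      have "((\<lambda>t. (Lc' (\<phi> t x) - Lc' (\<phi> 0 x)) / t) \<longlongrightarrow> (a x)\<^sup>2 * Lc x) (at 0 within ?S)"
      proof (rule lie_via_fun[OF dw1 r])
        show "\<And>t. \<bar>t\<bar> < 2 * T0 \<Longrightarrow> t \<in> ?S \<Longrightarrow> Lc' (\<phi> t x) = w1 t"
          using orbit_values(2)[OF x 2] unfolding w1_def by blast
        show "Lc' (\<phi> 0 x) = w1 0" unfolding id by (rule L0')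
      qed
      then show ?thesis unfolding has_lie_deriv_def id .
    qed
    show ?thesis using A B by simp
  qed
  then show "has_lie_deriv \<Gamma> \<phi> D Lc x (Lc' x)" "has_lie_deriv \<Gamma> \<phi> D Lc' x ((a x)\<^sup>2 * Lc x)" by auto
qed

end


context cset2 begin

lemma phiT0_cont: "continuous_on B (\<lambda>y. \<phi> T0 y)"
proof -
  have "continuous_on B ((\<lambda>(t, x). \<phi> t x) \<circ> (\<lambda>y. (T0, y)))"
  proof (rule continuous_on_compose)
    show "continuous_on B (\<lambda>y. (T0, y))" by (intro continuous_intros)
    have "(\<lambda>y. (T0, y)) ` B \<subseteq> \<Gamma>" using T0 by auto
    then show "continuous_on ((\<lambda>y. (T0, y)) ` B) (\<lambda>(t, x). \<phi> t x)"
      by (rule continuous_on_subset[OF pf_cont[OF flow]])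
  qed
  then show ?thesis by (simp add: o_def)
qed

lemma L1'_cont: "continuous_on B L1'"
proof -
  have T: "\<bar>T0\<bar> < 2 * T0" using T0 by simp
  have c1: "continuous_on B (\<lambda>y. L1 (\<phi> T0 y))"
  proof (rule continuous_on_compose2[OF L1c phiT0_cont])
    show "(\<lambda>y. \<phi> T0 y) ` B \<subseteq> N" using T0(2)[OF _ T] interior_subset by blast
  qed
  have c2: "continuous_on B L1" using L1c by (rule continuous_on_subset) auto
  have sh: "sinh T0 > 0" using T0 by simp
  have "continuous_on B (\<lambda>y. (L1 (\<phi> T0 y) - L1 y * cosh T0) / sinh T0)"
    using sh by (intro continuous_intros c1 c2) auto
  moreover have "(L1 (\<phi> T0 y) - L1 y * cosh T0) / sinh T0 = L1' y" if "y \<in> B" for y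
    using local_formula[OF that T] sh by (simp add: hh_def field_simps)
  ultimately show ?thesis using continuous_on_eq by (metis (no_types, lifting))
qed

lemma L1c_B: "continuous_on B L1" using L1c by (rule continuous_on_subset) auto

lemma SS_cont: "continuous_on B SS"
  unfolding SS_def by (intro continuous_intros L1c_B L1'_cont)

lemma base_cont: "continuous_on B (\<lambda>y. (L1 y + e * L1' y) / (\<delta> + SS y))"
proof -
  have nz: "\<delta> + SS y \<noteq> 0" if "y \<in> B" for y using dS[OF that] by simp
  show ?thesis by (intro continuous_intros L1c_B L1'_cont SS_cont) (use nz in blast)
qed

lemma within_D: "x \<in> D \<Longrightarrow> (g \<longlongrightarrow> l) (at x within B) \<Longrightarrow> (g \<longlongrightarrow> l) (at x within D)"
  by (rule tendsto_within_subset) auto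

lemma Rr_tendsto:
  assumes x: "x \<in> D" and e: "e = 1 \<or> e = -1"
  shows "(Rr e \<longlongrightarrow> Rr e x) (at x within D)"
proof -
  have xB: "x \<in> B" using x by simp
  have b: "((\<lambda>y. (L1 y + e * L1' y) / (\<delta> + SS y)) \<longlongrightarrow> (L1 x + e * L1' x) / (\<delta> + SS x)) (at x within D)"
    using base_cont[of e] xB unfolding continuous_on_def by (intro within_D[OF x]) auto
  have ac: "(a \<longlongrightarrow> a x) (at x within D)" using a_cont x unfolding continuous_on_def by auto
  have ev: "eventually (\<lambda>y. (L1 y + e * L1' y) / (\<delta> + SS y) \<ge> 0) (at x within D)"
    unfolding eventually_at_filter using base_e(1)[OF _ e] by (auto intro!: always_eventually)
  show ?thesis unfolding Rr_def
    by (rule tendsto_powr'[OF b ac]) (use a_pos[OF x] ev in auto)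
qed

lemma p_tendsto:
  assumes x: "x \<in> D"
  shows "((\<lambda>y. L1 y + e * L1' y) \<longlongrightarrow> L1 x + e * L1' x) (at x within D)"
proof -
  have "continuous_on B (\<lambda>y. L1 y + e * L1' y)" by (intro continuous_intros L1c_B L1'_cont)
  then show ?thesis using x unfolding continuous_on_def by (intro within_D[OF x]) auto
qed

lemma Fe_tendsto:
  assumes x: "x \<in> D" and e: "e = 1 \<or> e = -1" and p: "L1 x + e * L1' x > 0"
  shows "(Fe e \<longlongrightarrow> Fe e x) (at x within D)"
proof -
  have xB: "x \<in> B" using x by simp
  have evp: "eventually (\<lambda>y. L1 y + e * L1' y > 0) (at x within D)"
    using order_tendstoD(1)[OF p_tendsto[OF x] p] .
  have exc: "((\<lambda>y. ex e y) \<longlongrightarrow> ex e x) (at x within D)"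
  proof -
    have S: "(SS \<longlongrightarrow> SS x) (at x within D)"
      using SS_cont xB unfolding continuous_on_def by (intro within_D[OF x]) auto
    show ?thesis unfolding ex_def
      by (intro tendsto_intros S p_tendsto[OF x]) (use p dS[OF xB] in auto)
  qed
  have pair: "((\<lambda>y. (e * ex e y, y)) \<longlongrightarrow> (e * ex e x, x)) (at x within D)"
    by (intro tendsto_intros exc)
  have inG: "(e * ex e x, x) \<in> \<Gamma>" using exit_props(3)[OF xB e p exit_props(1)[OF xB e p] order_refl] by simp
  have evG: "eventually (\<lambda>y. (e * ex e y, y) \<in> \<Gamma> \<and> \<phi> (e * ex e y) y \<in> frontier B) (at x within D)"
  proof -
    have "eventually (\<lambda>y. y \<in> D) (at x within D)" by (simp add: eventually_at_filter)
    with evp show ?thesis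
    proof (rule eventually_elim2)
      fix y assume py: "L1 y + e * L1' y > 0" and y: "y \<in> D"
      then have yB: "y \<in> B" by simp
      show "(e * ex e y, y) \<in> \<Gamma> \<and> \<phi> (e * ex e y) y \<in> frontier B"
        using exit_props(3)[OF yB e py exit_props(1)[OF yB e py] order_refl] exit_props(5)[OF yB e py] by simp
    qed
  qed
  have evG': "eventually (\<lambda>y. (e * ex e y, y) \<in> \<Gamma>) (at x within D)"
    using evG by (rule eventually_mono) simp
  have ph: "((\<lambda>y. \<phi> (e * ex e y) y) \<longlongrightarrow> \<phi> (e * ex e x) x) (at x within D)"
    using continuous_on_tendsto_compose[OF pf_cont[OF flow] pair inG evG'] by simp
  show ?thesis unfolding Fe_def
    by (rule continuous_on_tendsto_compose[OF f_cont ph exit_props(5)[OF xB e p]])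
      (use evG in \<open>auto elim: eventually_mono\<close>)
qed

definition "M = (SOME M. M > 0 \<and> (\<forall>z\<in>frontier B. \<bar>f z\<bar> \<le> M))"

lemma M: "M > 0" "\<And>z. z \<in> frontier B \<Longrightarrow> \<bar>f z\<bar> \<le> M"
proof -
  have "compact (frontier B)"
    using compact_Int_closed[OF Bcomp frontier_closed[of B]] Bclosed frontier_subset_closed
    by (metis inf.absorb2)
  then have "bounded (f ` frontier B)" by (intro compact_imp_bounded compact_continuous_image f_cont)
  then obtain b where "b > 0" "\<forall>z\<in>f ` frontier B. norm z \<le> b" unfolding bounded_pos by blast
  then have "\<exists>M. M > 0 \<and> (\<forall>z\<in>frontier B. \<bar>f z\<bar> \<le> M)" by auto
  from someI_ex[OF this] show "M > 0" "\<And>z. z \<in> frontier B \<Longrightarrow> \<bar>f z\<bar> \<le> M" unfolding M_def[symmetric] by auto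
qed

lemma RF_bound:
  assumes y: "y \<in> D" and e: "e = 1 \<or> e = -1"
  shows "\<bar>Rr e y * Fe e y\<bar> \<le> M * Rr e y" "Rr e y \<ge> 0"
proof -
  have yB: "y \<in> B" using y by simp
  show R0: "Rr e y \<ge> 0" by (simp add: Rr_def)
  show "\<bar>Rr e y * Fe e y\<bar> \<le> M * Rr e y"
  proof (cases "L1 y + e * L1' y > 0")
    case True
    then have "\<bar>Fe e y\<bar> \<le> M" unfolding Fe_def by (intro M(2) exit_props(5)[OF yB e])
    then have "Rr e y * \<bar>Fe e y\<bar> \<le> Rr e y * M" using R0 by (rule mult_left_mono)
    then show ?thesis using R0 by (simp add: abs_mult mult.commute)
  next
    case False
    then have "L1 y + e * L1' y = 0" using v_bound_e[OF yB e] by simp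
    then show ?thesis by (simp add: Rr_def)
  qed
qed

lemma RF_tendsto:
  assumes x: "x \<in> D" and e: "e = 1 \<or> e = -1"
  shows "((\<lambda>y. Rr e y * Fe e y) \<longlongrightarrow> Rr e x * Fe e x) (at x within D)"
proof (cases "L1 x + e * L1' x > 0")
  case True
  show ?thesis by (intro tendsto_mult Rr_tendsto[OF x e] Fe_tendsto[OF x e True])
next
  case False
  have xB: "x \<in> B" using x by simp
  then have "L1 x + e * L1' x = 0" using v_bound_e[OF xB e] False by simp
  then have R0: "Rr e x = 0" by (simp add: Rr_def)
  have "((\<lambda>y. Rr e y * Fe e y) \<longlongrightarrow> 0) (at x within D)"
  proof (rule Lim_null_comparison)
    show "eventually (\<lambda>y. norm (Rr e y * Fe e y) \<le> M * Rr e y) (at x within D)"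
      unfolding eventually_at_filter using RF_bound[OF _ e] by (auto intro!: always_eventually)
    show "((\<lambda>y. M * Rr e y) \<longlongrightarrow> 0) (at x within D)"
      using tendsto_mult[OF tendsto_const Rr_tendsto[OF x e], of M] R0 by simp
  qed
  then show ?thesis using R0 by simp
qed

end


lemma pq_facts:
  fixes p q :: real
  assumes "0 \<le> p" "p \<le> 1" "0 \<le> q" "q \<le> 1" "p * q \<noteq> 1"
  shows "p * q < 1" "0 \<le> p * q" "1 - (p * q)\<^sup>2 > 0"
proof -
  have "p * q \<le> p" using assms mult_left_mono[of q 1 p] by simp
  then show pq: "p * q < 1" using assms by simp
  show pq0: "0 \<le> p * q" using assms by simp
  have "(p * q)\<^sup>2 \<le> p * q" using pq pq0 by (simp add: power2_eq_square mult_left_le)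
  then show "1 - (p * q)\<^sup>2 > 0" using pq by simp
qed

lemma LcF_bound:
  fixes p q G1 G2 :: real
  assumes "0 \<le> p" "p \<le> 1" "0 \<le> q" "q \<le> 1" "p * q \<noteq> 1"
  shows "\<bar>(G1 * (1 - q\<^sup>2) + G2 * (1 - p\<^sup>2)) / (1 - (p * q)\<^sup>2)\<bar> \<le> \<bar>G1\<bar> + \<bar>G2\<bar>"
proof -
  note f = pq_facts[OF assms]
  define d where "d = 1 - (p * q)\<^sup>2"
  have d: "d > 0" using f by (simp add: d_def)
  have q2: "q\<^sup>2 \<le> 1" "p\<^sup>2 \<le> 1" using assms by (auto simp: power_le_one)
  have "(p * q)\<^sup>2 \<le> q\<^sup>2" using assms by (simp add: power_mult_distrib mult_left_le_one_le power_le_one)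
  then have w1: "1 - q\<^sup>2 \<le> d" by (simp add: d_def)
  have "(p * q)\<^sup>2 \<le> p\<^sup>2" using assms by (simp add: power_mult_distrib mult_right_le_one_le power_le_one)
  then have w2: "1 - p\<^sup>2 \<le> d" by (simp add: d_def)
  have "\<bar>G1 * (1 - q\<^sup>2) + G2 * (1 - p\<^sup>2)\<bar> \<le> \<bar>G1\<bar> * (1 - q\<^sup>2) + \<bar>G2\<bar> * (1 - p\<^sup>2)"
    using q2 by (simp add: abs_mult abs_triangle_ineq[THEN order_trans])
  also have "\<dots> \<le> \<bar>G1\<bar> * d + \<bar>G2\<bar> * d" using w1 w2 by (intro add_mono mult_left_mono) auto
  finally have "\<bar>G1 * (1 - q\<^sup>2) + G2 * (1 - p\<^sup>2)\<bar> \<le> (\<bar>G1\<bar> + \<bar>G2\<bar>) * d" by (simp add: algebra_simps)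
  then show ?thesis using d by (simp add: d_def[symmetric] abs_div pos_divide_le_eq)
qed

lemma weights:
  fixes p q X Y Z :: real
  assumes "0 \<le> p" "p \<le> 1" "0 \<le> q" "q \<le> 1" "p * q \<noteq> 1"
  shows "\<bar>(p * X * (1 - q\<^sup>2) + q * Y * (1 - p\<^sup>2)) / (1 - (p * q)\<^sup>2) - Z\<bar> \<le> \<bar>X - Z\<bar> + \<bar>Y - Z\<bar> + (1 - p) * \<bar>Z\<bar>"
proof -
  note f = pq_facts[OF assms]
  define d where "d = 1 - (p * q)\<^sup>2"
  have d: "d > 0" using f by (simp add: d_def)
  define w1 where "w1 = p * (1 - q\<^sup>2) / d"
  define w2 where "w2 = q * (1 - p\<^sup>2) / d"
  define r where "r = (1 - p) * (1 - q) / (1 + p * q)"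
  have q2: "q\<^sup>2 \<le> 1" "p\<^sup>2 \<le> 1" using assms by (auto simp: power_le_one)
  have w1: "w1 \<ge> 0" using assms q2 d by (simp add: w1_def)
  have w2: "w2 \<ge> 0" using assms q2 d by (simp add: w2_def)
  have dd: "d = (1 - p * q) * (1 + p * q)" by (simp add: d_def power2_eq_square algebra_simps)
  have pos: "1 - p * q > 0" "1 + p * q > 0" using f by auto
  have wr: "w1 + w2 + r = 1"
  proof -
    have "p * (1 - q\<^sup>2) + q * (1 - p\<^sup>2) + (1 - p) * (1 - q) * (1 - p * q) = d"
      by (simp add: d_def power2_eq_square algebra_simps)
    moreover have r': "r = (1 - p) * (1 - q) * (1 - p * q) / d"
    proof -
      have "(1 - p) * (1 - q) * (1 - p * q) / d = ((1 - p) * (1 - q) * (1 - p * q)) / ((1 + p * q) * (1 - p * q))"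
        by (simp add: dd mult.commute)
      also have "\<dots> = (1 - p) * (1 - q) / (1 + p * q)"
        by (rule mult_divide_mult_cancel_right) (use pos in simp)
      finally show ?thesis by (simp add: r_def)
    qed
    moreover have "w1 + w2 + r = (p * (1 - q\<^sup>2) + q * (1 - p\<^sup>2) + (1 - p) * (1 - q) * (1 - p * q)) / d"
      unfolding w1_def w2_def r' by (simp add: add_divide_distrib)
    ultimately show ?thesis using d by simp
  qed
  have r0: "r \<ge> 0" using assms pos by (simp add: r_def)
  have r1: "r \<le> 1 - p"
  proof -
    have pq0: "p * q \<ge> 0" using assms by simp
    have "1 - q \<le> 1 + p * q" using pq0 assms by linarith
    then have "(1 - q) / (1 + p * q) \<le> 1" using pos by simp
    then have "(1 - p) * ((1 - q) / (1 + p * q)) \<le> (1 - p) * 1" using assms by (intro mult_left_mono) auto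
    then show ?thesis by (simp add: r_def)
  qed
  have eq: "(p * X * (1 - q\<^sup>2) + q * Y * (1 - p\<^sup>2)) / (1 - (p * q)\<^sup>2) - Z = w1 * (X - Z) + w2 * (Y - Z) - r * Z"
  proof -
    have "(p * X * (1 - q\<^sup>2) + q * Y * (1 - p\<^sup>2)) / (1 - (p * q)\<^sup>2) = w1 * X + w2 * Y"
      unfolding w1_def w2_def d_def[symmetric] by (simp add: add_divide_distrib mult_ac)
    moreover have "Z = (w1 + w2 + r) * Z" using wr by simp
    ultimately show ?thesis by (simp add: algebra_simps)
  qed
  have "\<bar>w1 * (X - Z) + w2 * (Y - Z) - r * Z\<bar> \<le> w1 * \<bar>X - Z\<bar> + w2 * \<bar>Y - Z\<bar> + r * \<bar>Z\<bar>"
  proof -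
    have t: "\<bar>A + B - C\<bar> \<le> \<bar>A\<bar> + \<bar>B\<bar> + \<bar>C\<bar>" for A B C :: real by arith
    have "\<bar>w1 * (X - Z)\<bar> = w1 * \<bar>X - Z\<bar>" "\<bar>w2 * (Y - Z)\<bar> = w2 * \<bar>Y - Z\<bar>" "\<bar>r * Z\<bar> = r * \<bar>Z\<bar>"
      using w1 w2 r0 by (simp_all add: abs_mult)
    then show ?thesis using t[of "w1 * (X - Z)" "w2 * (Y - Z)" "r * Z"] by simp
  qed
  also have "\<dots> \<le> 1 * \<bar>X - Z\<bar> + 1 * \<bar>Y - Z\<bar> + (1 - p) * \<bar>Z\<bar>"
    using w1 w2 r0 r1 wr by (intro add_mono mult_right_mono) auto
  finally show ?thesis using eq by simp
qed



context cset2 begin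

definition "LcF y = (Gp y * (1 - (Q y)\<^sup>2) + Gm y * (1 - (P y)\<^sup>2)) / (1 - (P y * Q y)\<^sup>2)"

lemma al_be: "al y + be y = LcF y"
  unfolding al_def be_def LcF_def add_divide_distrib[symmetric] by (simp add: algebra_simps)

lemma Lc_D: "y \<in> D \<Longrightarrow> P y * Q y \<noteq> 1 \<Longrightarrow> Lc y = LcF y"
  by (simp add: Lc_def al_be)

lemma Gp_eq: "Gp = (\<lambda>y. Rr 1 y * Fe 1 y)" by (rule ext) (simp add: Gp_def P_Rr Fp_Fe)
lemma Gm_eq: "Gm = (\<lambda>y. Rr (-1) y * Fe (-1) y)" by (rule ext) (simp add: Gm_def Q_Rr Fm_Fe)
lemma P_eq: "P = Rr 1" by (rule ext) (simp add: P_Rr)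
lemma Q_eq: "Q = Rr (-1)" by (rule ext) (simp add: Q_Rr)

lemma P_tendsto: "x \<in> D \<Longrightarrow> (P \<longlongrightarrow> P x) (at x within D)"
  unfolding P_eq by (rule Rr_tendsto) auto
lemma Q_tendsto: "x \<in> D \<Longrightarrow> (Q \<longlongrightarrow> Q x) (at x within D)"
  unfolding Q_eq by (rule Rr_tendsto) auto
lemma Gp_tendsto: "x \<in> D \<Longrightarrow> (Gp \<longlongrightarrow> Gp x) (at x within D)"
  unfolding Gp_eq by (rule RF_tendsto) auto
lemma Gm_tendsto: "x \<in> D \<Longrightarrow> (Gm \<longlongrightarrow> Gm x) (at x within D)"
  unfolding Gm_eq by (rule RF_tendsto) auto

lemma cont_nontangent:
  assumes x: "x \<in> D" and pq: "P x * Q x \<noteq> 1"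
  shows "(Lc \<longlongrightarrow> Lc x) (at x within D)"
proof -
  note b = PQ_bounds[OF x]
  have den: "1 - (P x * Q x)\<^sup>2 \<noteq> 0" using pq_facts(3)[OF b pq] by simp
  have L: "(LcF \<longlongrightarrow> LcF x) (at x within D)"
    unfolding LcF_def
    by (intro tendsto_intros P_tendsto[OF x] Q_tendsto[OF x] Gp_tendsto[OF x] Gm_tendsto[OF x] den)
  have ev: "eventually (\<lambda>y. P y * Q y \<noteq> 1) (at x within D)"
    by (rule tendsto_imp_eventually_ne[OF tendsto_mult[OF P_tendsto[OF x] Q_tendsto[OF x]] pq])
  have ev2: "eventually (\<lambda>y. LcF y = Lc y) (at x within D)"
  proof -
    have "eventually (\<lambda>y. y \<in> D) (at x within D)" by (simp add: eventually_at_filter)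
    with ev show ?thesis by (rule eventually_elim2) (simp add: Lc_D)
  qed
  show ?thesis using Lim_transform_eventually[OF L ev2] Lc_D[OF x pq] by simp
qed

lemma tangent_vals:
  assumes x: "x \<in> D" and pq: "P x * Q x = 1"
  shows "Fp x = f x" "Fm x = f x" "Lc x = f x"
proof -
  note tg = tangency[OF x pq]
  show "Fp x = f x" using tg(5) by (simp add: Fp_def pf_id[OF flow])
  show "Fm x = f x" using tg(6) by (simp add: Fm_def pf_id[OF flow])
  show "Lc x = f x" using x pq by (simp add: Lc_def)
qed

lemma cont_tangent:
  assumes x: "x \<in> D" and pq: "P x * Q x = 1"
  shows "(Lc \<longlongrightarrow> Lc x) (at x within D)"
proof -
  note tg = tangency[OF x pq]
  note tv = tangent_vals[OF x pq]
  have bnd: "\<bar>Lc y - f x\<bar> \<le> \<bar>Fp y - f x\<bar> + \<bar>Fm y - f x\<bar> + (1 - P y) * \<bar>f x\<bar>" if y: "y \<in> D" for y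
  proof (cases "P y * Q y = 1")
    case True
    note tvy = tangent_vals[OF y True]
    have "(1 - P y) * \<bar>f x\<bar> \<ge> 0" using PQ_bounds[OF y] by simp
    then show ?thesis using tvy by simp
  next
    case False
    have "Lc y = (P y * Fp y * (1 - (Q y)\<^sup>2) + Q y * Fm y * (1 - (P y)\<^sup>2)) / (1 - (P y * Q y)\<^sup>2)"
      using Lc_D[OF y False] by (simp add: LcF_def Gp_def Gm_def)
    then show ?thesis using weights[OF PQ_bounds[OF y] False, of "Fp y" "Fm y" "f x"] by simp
  qed
  have Fpt: "(Fp \<longlongrightarrow> f x) (at x within D)"
  proof -
    have "Fp = Fe 1" by (rule ext) (simp add: Fp_Fe)
    moreover have "(Fe 1 \<longlongrightarrow> Fe 1 x) (at x within D)" using tg(3) by (intro Fe_tendsto[OF x]) auto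
    ultimately show ?thesis using tv(1) by (simp add: Fp_Fe)
  qed
  have Fmt: "(Fm \<longlongrightarrow> f x) (at x within D)"
  proof -
    have "Fm = Fe (-1)" by (rule ext) (simp add: Fm_Fe)
    moreover have "(Fe (-1) \<longlongrightarrow> Fe (-1) x) (at x within D)" using tg(4) by (intro Fe_tendsto[OF x]) auto
    ultimately show ?thesis using tv(2) by (simp add: Fm_Fe)
  qed
  have g0: "((\<lambda>y. \<bar>Fp y - f x\<bar> + \<bar>Fm y - f x\<bar> + (1 - P y) * \<bar>f x\<bar>) \<longlongrightarrow> 0) (at x within D)"
  proof -
    have "((\<lambda>y. \<bar>Fp y - f x\<bar> + \<bar>Fm y - f x\<bar> + (1 - P y) * \<bar>f x\<bar>) \<longlongrightarrow>
        \<bar>f x - f x\<bar> + \<bar>f x - f x\<bar> + (1 - P x) * \<bar>f x\<bar>) (at x within D)"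
      by (intro tendsto_intros Fpt Fmt P_tendsto[OF x])
    then show ?thesis using tg(1) by simp
  qed
  have "((\<lambda>y. Lc y - f x) \<longlongrightarrow> 0) (at x within D)"
  proof (rule Lim_null_comparison[OF _ g0])
    show "eventually (\<lambda>y. norm (Lc y - f x) \<le> \<bar>Fp y - f x\<bar> + \<bar>Fm y - f x\<bar> + (1 - P y) * \<bar>f x\<bar>) (at x within D)"
      unfolding eventually_at_filter using bnd by (auto intro!: always_eventually)
  qed
  then show ?thesis using tv(3) by (simp add: LIM_zero_cancel)
qed

lemma cont_D: "x \<in> D \<Longrightarrow> (Lc \<longlongrightarrow> Lc x) (at x within B)"
proof -
  assume x: "x \<in> D"
  have "(Lc \<longlongrightarrow> Lc x) (at x within D)"
    using cont_tangent[OF x] cont_nontangent[OF x] by blast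
  moreover have "at x within B = at x within D"
    by (rule at_within_nhd[of x "- \<Lambda>"]) (use x Lamclosed in auto)
  ultimately show ?thesis by simp
qed

lemma cont_Lam:
  assumes x: "x \<in> \<Lambda>"
  shows "(Lc \<longlongrightarrow> Lc x) (at x within B)"
proof -
  have xB: "x \<in> B" using x LamB by auto
  have Lx: "L1 x = 0" using L1z[OF x] .
  have Lcx: "Lc x = 0" using x by (simp add: Lc_def)
  define g where "g y = 2 * M * (2 * L1 y / \<delta>) powr c0" for y
  have Lt: "(L1 \<longlongrightarrow> 0) (at x within B)"
    using L1c_B xB Lx unfolding continuous_on_def by force
  have g0: "(g \<longlongrightarrow> 0) (at x within B)"
  proof -
    have "((\<lambda>y. 2 * M * (2 * L1 y / \<delta>) powr c0) \<longlongrightarrow> 2 * M * (2 * 0 / \<delta>) powr c0) (at x within B)"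
    proof (intro tendsto_intros Lt)
      show "2 * 0 / \<delta> \<noteq> 0 \<or> 0 < c0 \<and> eventually (\<lambda>y. 0 \<le> 2 * L1 y / \<delta>) (at x within B)"
        using c0(1) dpos L1nn by (auto simp: eventually_at_filter intro!: always_eventually)
    qed (use dpos in simp)
    then show ?thesis by (simp add: g_def[abs_def])
  qed
  have evs: "eventually (\<lambda>y. L1 y < \<delta> / 2) (at x within B)"
    using order_tendstoD(2)[OF Lt, of "\<delta> / 2"] dpos by simp
  have bnd: "\<bar>Lc y\<bar> \<le> g y" if y: "y \<in> B" and sm: "L1 y < \<delta> / 2" for y
  proof (cases "y \<in> \<Lambda>")
    case True
    then show ?thesis using M(1) by (simp add: Lc_def g_def)
  next
    case False
    then have yD: "y \<in> D" using y by simp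
    have A0: "L1 y \<ge> 0" using L1nn y by auto
    have nt: "P y * Q y \<noteq> 1"
    proof
      assume "P y * Q y = 1"
      then have "ex 1 y = 0" "L1 y + 1 * L1' y > 0" using tangency[OF yD] by auto
      then have "hh y (1 * 0) = \<delta>" using exit_props(4)[OF y, of 1] by auto
      then show False using sm dpos by (simp add: hh_def)
    qed
    have base: "Rr e y \<le> (2 * L1 y / \<delta>) powr c0" if e: "e = 1 \<or> e = -1" for e
    proof -
      have b0: "(L1 y + e * L1' y) / (\<delta> + SS y) \<ge> 0" using base_e(1)[OF y e] .
      have "L1 y + e * L1' y \<le> 2 * L1 y" using v_bound[OF y] e by auto
      moreover have "\<delta> \<le> \<delta> + SS y" using SS_nn[OF y] by simp
      ultimately have b1: "(L1 y + e * L1' y) / (\<delta> + SS y) \<le> 2 * L1 y / \<delta>"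
        using dpos A0 v_bound_e[OF y e] by (intro frac_le) auto
      have ay: "a y \<ge> c0" "a y \<ge> 0" using c0(2)[OF yD] c0(1) by auto
      have "Rr e y \<le> (2 * L1 y / \<delta>) powr a y"
        unfolding Rr_def by (rule powr_mono2[OF ay(2) b0 b1])
      also have "\<dots> \<le> (2 * L1 y / \<delta>) powr c0"
        using ay A0 dpos sm by (intro powr_mono') auto
      finally show ?thesis .
    qed
    have "\<bar>Lc y\<bar> \<le> \<bar>Gp y\<bar> + \<bar>Gm y\<bar>"
      using Lc_D[OF yD nt] LcF_bound[OF PQ_bounds[OF yD] nt] by (simp add: LcF_def)
    also have "\<dots> \<le> M * Rr 1 y + M * Rr (-1) y"
      using RF_bound[OF yD, of 1] RF_bound[OF yD, of "-1"] by (intro add_mono) (simp_all add: Gp_eq Gm_eq)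
    also have "\<dots> \<le> M * (2 * L1 y / \<delta>) powr c0 + M * (2 * L1 y / \<delta>) powr c0"
      using base[of 1] base[of "-1"] M(1) by (intro add_mono mult_left_mono) auto
    finally show ?thesis by (simp add: g_def)
  qed
  have "(Lc \<longlongrightarrow> 0) (at x within B)"
  proof (rule Lim_null_comparison[OF _ g0])
    have "eventually (\<lambda>y. y \<in> B) (at x within B)" by (simp add: eventually_at_filter)
    with evs show "eventually (\<lambda>y. norm (Lc y) \<le> g y) (at x within B)"
      by (rule eventually_elim2) (use bnd in auto)
  qed
  then show ?thesis using Lcx by simp
qed

lemma Lc_cont: "continuous_on B Lc"
  unfolding continuous_on_def
proof
  fix x assume "x \<in> B"
  then show "(Lc \<longlongrightarrow> Lc x) (at x within B)"
    using cont_D cont_Lam by (cases "x \<in> \<Lambda>") auto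
qed

end


lemma core_max:
  fixes g g' :: "real \<Rightarrow> real"
  assumes J: "open J" "0 \<in> J"
    and d1: "\<And>s. s \<in> J \<Longrightarrow> (g has_real_derivative g' s) (at s)"
    and d2: "(g' has_real_derivative c) (at 0)" and c: "c > 0"
    and mx: "\<And>s. s \<in> J \<Longrightarrow> g s \<le> g 0"
  shows False
proof -
  obtain d where d: "d > 0" "ball 0 d \<subseteq> J" using J open_contains_ball by blast
  have inJ: "s \<in> J" if "\<bar>s\<bar> < d" for s using d that by (auto simp: dist_real_def)
  have g'0: "g' 0 = 0"
    by (rule DERIV_local_max[OF d1[OF J(2)] d(1)]) (use inJ mx in auto)
  obtain d2 where d2p: "d2 > 0" and inc: "\<And>h. h > 0 \<Longrightarrow> h < d2 \<Longrightarrow> g' 0 < g' (0 + h)"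
    using DERIV_pos_inc_right[OF d2 c] by blast
  define h where "h = min d d2 / 2"
  have h: "0 < h" "h < d" "h < d2" using d d2p by (auto simp: h_def)
  obtain z where z: "0 < z" "z < h" "g h - g 0 = (h - 0) * g' z"
    using MVT2[OF h(1), of g g'] d1 inJ h by force
  have "g' z > 0" using inc[of z] z h g'0 by simp
  then have "h * g' z > 0" using h by simp
  then have "g h > g 0" using z by simp
  moreover have "g h \<le> g 0" using mx inJ h by simp
  ultimately show False by simp
qed

lemma sq_lt1: "0 \<le> (q::real) \<Longrightarrow> q < 1 \<Longrightarrow> 1 - q\<^sup>2 > 0"
proof -
  assume q: "0 \<le> q" "q < 1"
  have "q * q \<le> q" using q by (intro mult_right_le_one_le) auto
  then show ?thesis using q by (simp add: power2_eq_square)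
qed

context cset2 begin

lemma Lc_frontier: "x \<in> frontier B \<Longrightarrow> Lc x = f x"
proof -
  assume xf: "x \<in> frontier B"
  have xB: "x \<in> B" and Lx: "L1 x = \<delta>" using frontierB[OF xf] by auto
  have xL: "x \<notin> \<Lambda>" using Lx L1z dpos by force
  have xD: "x \<in> D" using xB xL by simp
  show "Lc x = f x"
  proof (cases "P x * Q x = 1")
    case True then show ?thesis using xL by (simp add: Lc_def)
  next
    case False
    have Sx: "SS x = \<bar>L1' x\<bar>" by (simp add: SS_def Lx)
    note b = PQ_bounds[OF xD]
    have ax: "a x > 0" using a_pos[OF xD] .
    show ?thesis
    proof (cases "L1' x \<ge> 0")
      case True
      have p: "L1 x + 1 * L1' x > 0" using Lx dpos True by simp
      have e0: "ex 1 x = 0" using True Lx dpos by (simp add: ex_def Sx)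
      have P1: "P x = 1" using PQ_e(3)[OF xB _ p] e0 by (simp add: P_alt)
      have Fpx: "Fp x = f x" using e0 by (simp add: Fp_def pf_id[OF flow])
      have "Q x < 1" using False P1 b by auto
      then have Q1: "1 - (Q x)\<^sup>2 \<noteq> 0" using sq_lt1[of "Q x"] b by simp
      have "LcF x = f x" unfolding LcF_def using P1 Fpx Q1 by (simp add: Gp_def)
      then show ?thesis using Lc_D[OF xD False] by simp
    next
      case False2: False
      have p: "L1 x + (-1) * L1' x > 0" using Lx dpos False2 by simp
      have e0: "ex (-1) x = 0" using False2 Lx dpos by (simp add: ex_def Sx)
      have Q1: "Q x = 1" using PQ_e(3)[OF xB _ p] e0 by (simp add: Q_alt)
      have Fmx: "Fm x = f x" using e0 by (simp add: Fm_def pf_id[OF flow])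
      have "P x < 1" using False Q1 b by auto
      then have P1: "1 - (P x)\<^sup>2 \<noteq> 0" using sq_lt1[of "P x"] b by simp
      have "LcF x = f x" unfolding LcF_def using Q1 Fmx P1 by (simp add: Gm_def)
      then show ?thesis using Lc_D[OF xD False] by simp
    qed
  qed
qed

lemma Rr_pos:
  assumes y: "y \<in> D" and e: "e = 1 \<or> e = -1"
  shows "L1 y + e * L1' y > 0 \<Longrightarrow> Rr e y > 0 \<and> \<phi> (e * ex e y) y \<in> frontier B"
    "\<not> L1 y + e * L1' y > 0 \<Longrightarrow> Rr e y = 0"
proof -
  have yB: "y \<in> B" using y by simp
  show "L1 y + e * L1' y > 0 \<Longrightarrow> Rr e y > 0 \<and> \<phi> (e * ex e y) y \<in> frontier B"
    using PQ_e(3)[OF yB e] exit_props(5)[OF yB e] by (simp add: Rr_def)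
  show "\<not> L1 y + e * L1' y > 0 \<Longrightarrow> Rr e y = 0"
    using v_bound_e[OF yB e] by (simp add: Rr_def)
qed


lemma RF_sign:
  assumes fpos: "\<And>z. z \<in> frontier B \<Longrightarrow> f z > 0" and y: "y \<in> D" and e: "e = 1 \<or> e = -1"
  shows "Rr e y * Fe e y \<ge> 0" "Rr e y > 0 \<Longrightarrow> Rr e y * Fe e y > 0"
    "Rr e y > 0 \<longleftrightarrow> L1 y + e * L1' y > 0"
proof -
  have "(Rr e y * Fe e y \<ge> 0 \<and> (Rr e y > 0 \<longrightarrow> Rr e y * Fe e y > 0)) \<and> (Rr e y > 0 \<longleftrightarrow> L1 y + e * L1' y > 0)"
  proof (cases "L1 y + e * L1' y > 0")
    case True
    have "Rr e y > 0" "f (\<phi> (e * ex e y) y) > 0" using Rr_pos(1)[OF y e True] fpos by auto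
    then show ?thesis using True by (simp add: Fe_def)
  next
    case False
    then show ?thesis using Rr_pos(2)[OF y e False] by simp
  qed
  then show "Rr e y * Fe e y \<ge> 0" "Rr e y > 0 \<Longrightarrow> Rr e y * Fe e y > 0"
    "Rr e y > 0 \<longleftrightarrow> L1 y + e * L1' y > 0" by auto
qed

lemma Lc_pos:
  assumes fpos: "\<And>z. z \<in> frontier B \<Longrightarrow> f z > 0" and x: "x \<in> D"
  shows "Lc x > 0"
proof (cases "P x * Q x = 1")
  case True
  have e0: "ex 1 x = 0" and p: "L1 x + 1 * L1' x > 0" using tangency[OF x True] by auto
  have xB: "x \<in> B" using x by simp
  have "\<phi> (1 * ex 1 x) x \<in> frontier B" by (rule exit_props(5)[OF xB _ p]) simp
  then have "x \<in> frontier B" using e0 by (simp add: pf_id[OF flow])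
  then show ?thesis using tangent_vals(3)[OF x True] fpos by simp
next
  case False
  note b = PQ_bounds[OF x]
  note pf = pq_facts[OF b False]
  have xL: "x \<notin> \<Lambda>" and xB: "x \<in> B" using x by auto
  have A: "L1 x > 0" using L1p xL xB by auto
  note s1 = RF_sign[OF fpos x, of 1, folded P_Rr Fp_Fe Gp_def[unfolded P_Rr Fp_Fe], simplified]
  note s2 = RF_sign[OF fpos x, of "-1", folded Q_Rr Fm_Fe, simplified]
  have Gp0: "Gp x \<ge> 0" "P x > 0 \<Longrightarrow> Gp x > 0" using s1 by (auto simp: Gp_def P_Rr Fp_Fe)
  have Gm0: "Gm x \<ge> 0" "Q x > 0 \<Longrightarrow> Gm x > 0" using s2 by (auto simp: Gm_def Q_Rr Fm_Fe)
  have Pp: "P x > 0 \<longleftrightarrow> L1 x + L1' x > 0" using s1(3) by (simp add: P_Rr)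
  have Qp: "Q x > 0 \<longleftrightarrow> L1 x - L1' x > 0" using s2(3) by (simp add: Q_Rr)
  have q2: "1 - (Q x)\<^sup>2 \<ge> 0" "1 - (P x)\<^sup>2 \<ge> 0" using b by (auto simp: power_le_one)
  have t1: "Gp x * (1 - (Q x)\<^sup>2) \<ge> 0" "Gm x * (1 - (P x)\<^sup>2) \<ge> 0" using Gp0 Gm0 q2 by auto
  have num: "Gp x * (1 - (Q x)\<^sup>2) + Gm x * (1 - (P x)\<^sup>2) > 0"
  proof (cases "P x > 0")
    case True
    show ?thesis
    proof (cases "Q x < 1")
      case True
      then have "Gp x * (1 - (Q x)\<^sup>2) > 0" using Gp0(2)[OF \<open>P x > 0\<close>] sq_lt1[of "Q x"] b by simp
      then show ?thesis using t1 by simp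
    next
      case False
      then have Q1: "Q x = 1" using b by simp
      then have "P x < 1" using pf(1) by simp
      then have "Gm x * (1 - (P x)\<^sup>2) > 0" using Gm0(2) Q1 sq_lt1[of "P x"] b by simp
      then show ?thesis using t1 by simp
    qed
  next
    case False
    then have P0: "P x = 0" using b by simp
    then have "\<not> L1 x + L1' x > 0" using Pp by simp
    then have "L1 x - L1' x > 0" using A by simp
    then have "Q x > 0" using Qp by simp
    then have "Gm x * (1 - (P x)\<^sup>2) > 0" using Gm0(2) P0 by simp
    then show ?thesis using t1 by simp
  qed
  have "LcF x > 0" unfolding LcF_def using num pf(3) by simp
  then show ?thesis using Lc_D[OF x False] by simp
qed

end


context cset2 begin

lemma sol_orbit:
  assumes lu1: "\<And>x. x \<in> D \<Longrightarrow> has_lie_deriv \<Gamma> \<phi> D u x (u' x)"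
    and lu2: "\<And>x. x \<in> D \<Longrightarrow> has_lie_deriv \<Gamma> \<phi> D u' x ((a x)\<^sup>2 * u x)"
    and m: "m \<in> interior B - \<Lambda>"
  defines "J \<equiv> {t. (t, m) \<in> \<Gamma> \<and> \<phi> t m \<in> interior B - \<Lambda>}"
  shows "open J" "0 \<in> J" "\<And>s. s \<in> J \<Longrightarrow> ((\<lambda>t. u (\<phi> t m)) has_real_derivative u' (\<phi> s m)) (at s)"
    "((\<lambda>t. u' (\<phi> t m)) has_real_derivative (a m)\<^sup>2 * u m) (at 0)"
    "\<And>s. s \<in> J \<Longrightarrow> \<phi> s m \<in> B"
proof -
  have oW: "open (interior B - \<Lambda>)" using Lamclosed by (simp add: open_Diff)
  show oJ: "open J" unfolding J_def by (rule pf_open_slice[OF flow oW])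
  show J0: "0 \<in> J" using m by (simp add: J_def pf_zero[OF flow] pf_id[OF flow])
  have JD: "\<And>s. s \<in> J \<Longrightarrow> (s, m) \<in> \<Gamma> \<and> \<phi> s m \<in> D"
    unfolding J_def using interior_subset by blast
  show "\<And>s. s \<in> J \<Longrightarrow> \<phi> s m \<in> B" using JD by auto
  show "\<And>s. s \<in> J \<Longrightarrow> ((\<lambda>t. u (\<phi> t m)) has_real_derivative u' (\<phi> s m)) (at s)"
    by (rule orbit_deriv[OF flow oJ _ JD]) (use JD lu1 in auto)
  have "((\<lambda>t. u' (\<phi> t m)) has_real_derivative (a (\<phi> 0 m))\<^sup>2 * u (\<phi> 0 m)) (at 0)"
    by (rule orbit_deriv[OF flow oJ J0 JD]) (use JD J0 lu2 in auto)
  then show "((\<lambda>t. u' (\<phi> t m)) has_real_derivative (a m)\<^sup>2 * u m) (at 0)"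
    by (simp add: pf_id[OF flow])
qed

definition "is_sol u \<longleftrightarrow> continuous_on B u \<and> (\<forall>x\<in>\<Lambda>. u x = 0) \<and>
   second_lie_deriv_eq \<Gamma> \<phi> D u (\<lambda>x. (a x)\<^sup>2 * u x) \<and> (\<forall>x\<in>frontier B. u x = f x)"

lemma no_extremum:
  assumes s1: "is_sol u1" and s2: "is_sol u2" and sg: "sg = 1 \<or> sg = -1"
    and m: "m \<in> B" and pos: "sg * (u1 m - u2 m) > 0"
    and mx: "\<And>y. y \<in> B \<Longrightarrow> sg * (u1 y - u2 y) \<le> sg * (u1 m - u2 m)"
  shows False
proof -
  obtain u1' where d1: "\<And>x. x \<in> D \<Longrightarrow> has_lie_deriv \<Gamma> \<phi> D u1 x (u1' x)"
    "\<And>x. x \<in> D \<Longrightarrow> has_lie_deriv \<Gamma> \<phi> D u1' x ((a x)\<^sup>2 * u1 x)"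
    using s1 unfolding is_sol_def second_lie_deriv_eq_def by blast
  obtain u2' where d2: "\<And>x. x \<in> D \<Longrightarrow> has_lie_deriv \<Gamma> \<phi> D u2 x (u2' x)"
    "\<And>x. x \<in> D \<Longrightarrow> has_lie_deriv \<Gamma> \<phi> D u2' x ((a x)\<^sup>2 * u2 x)"
    using s2 unfolding is_sol_def second_lie_deriv_eq_def by blast
  have mL: "m \<notin> \<Lambda>" using s1 s2 pos by (auto simp: is_sol_def)
  have mF: "m \<notin> frontier B" using s1 s2 pos by (auto simp: is_sol_def)
  have mW: "m \<in> interior B - \<Lambda>" using notfrontier_int[OF m mF] mL by simp
  note o1 = sol_orbit[OF d1 mW] and o2 = sol_orbit[OF d2 mW]
  define J where "J = {t. (t, m) \<in> \<Gamma> \<and> \<phi> t m \<in> interior B - \<Lambda>}"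
  let ?g = "\<lambda>t. sg * (u1 (\<phi> t m) - u2 (\<phi> t m))"
  let ?g' = "\<lambda>t. sg * (u1' (\<phi> t m) - u2' (\<phi> t m))"
  have am: "a m > 0" using a_pos mW interior_subset by blast
  show False
  proof (rule core_max[of J ?g ?g' "sg * ((a m)\<^sup>2 * u1 m - (a m)\<^sup>2 * u2 m)"])
    show "open J" "0 \<in> J" using o1 by (auto simp: J_def)
    show "\<And>s. s \<in> J \<Longrightarrow> (?g has_real_derivative ?g' s) (at s)"
      using o1(3) o2(3) unfolding J_def by (auto intro!: derivative_eq_intros)
    show "(?g' has_real_derivative sg * ((a m)\<^sup>2 * u1 m - (a m)\<^sup>2 * u2 m)) (at 0)"
      using o1(4) o2(4) by (auto intro!: derivative_eq_intros)
    have eq: "sg * ((a m)\<^sup>2 * u1 m - (a m)\<^sup>2 * u2 m) = (a m)\<^sup>2 * (sg * (u1 m - u2 m))"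
      by (simp add: algebra_simps)
    have "(a m)\<^sup>2 * (sg * (u1 m - u2 m)) > 0" using am pos by simp
    then show "sg * ((a m)\<^sup>2 * u1 m - (a m)\<^sup>2 * u2 m) > 0" by (subst eq)
    show "\<And>s. s \<in> J \<Longrightarrow> ?g s \<le> ?g 0"
      using mx o1(5) unfolding J_def by (auto simp: pf_id[OF flow])
  qed
qed

lemma uniqueness:
  assumes s1: "is_sol u1" and s2: "is_sol u2" and x: "x \<in> B"
  shows "u1 x = u2 x"
proof (rule ccontr)
  assume ne: "u1 x \<noteq> u2 x"
  have c: "continuous_on B (\<lambda>y. sg * (u1 y - u2 y))" for sg
    using s1 s2 unfolding is_sol_def by (intro continuous_intros) auto
  have ex: "\<exists>m\<in>B. \<forall>y\<in>B. sg * (u1 y - u2 y) \<le> sg * (u1 m - u2 m)" for sg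
    using continuous_attains_sup[OF Bcomp _ c] x by blast
  consider "u1 x - u2 x > 0" | "u1 x - u2 x < 0" using ne by linarith
  then show False
  proof cases
    case 1
    obtain m where m: "m \<in> B" "\<forall>y\<in>B. 1 * (u1 y - u2 y) \<le> 1 * (u1 m - u2 m)" using ex[of 1] by blast
    have p: "1 * (u1 m - u2 m) > 0" using m x 1 by force
    show False by (rule no_extremum[OF s1 s2 _ m(1), of 1]) (use p m(2) in auto)
  next
    case 2
    obtain m where m: "m \<in> B" "\<forall>y\<in>B. (-1) * (u1 y - u2 y) \<le> (-1) * (u1 m - u2 m)" using ex[of "-1"] by blast
    have p: "(-1) * (u1 m - u2 m) > 0" using m x 2 by force
    show False by (rule no_extremum[OF s1 s2 _ m(1), of "-1"]) (use p m(2) in auto)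
  qed
qed

lemma Lc_sol: "is_sol Lc"
  unfolding is_sol_def
proof (intro conjI)
  show "continuous_on B Lc" by (rule Lc_cont)
  show "\<forall>x\<in>\<Lambda>. Lc x = 0" by (simp add: Lc_def)
  show "second_lie_deriv_eq \<Gamma> \<phi> D Lc (\<lambda>x. (a x)\<^sup>2 * Lc x)"
    unfolding second_lie_deriv_eq_def using lie_Lc by blast
  show "\<forall>x\<in>frontier B. Lc x = f x" using Lc_frontier by blast
qed

end

theorem mainTheorem10:
  fixes \<Gamma> :: "(real \<times> 'a::metric_space) set"
    and \<phi> :: "real \<Rightarrow> 'a \<Rightarrow> 'a"
    and \<Lambda> N :: "'a set"
    and L1 a f :: "'a \<Rightarrow> real"
    and \<delta> :: real
  assumes flow: "partial_flow \<Gamma> \<phi>"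
    and iso: "isolated_set \<Gamma> \<phi> \<Lambda>"
    and N: "isolating_nbhd \<Gamma> \<phi> \<Lambda> N"
    and cat: "catenary \<Gamma> \<phi> \<Lambda> N L1"
    and delta: "\<delta> > 0"
    and B_sub: "{x\<in>N. L1 x \<le> \<delta>} \<subseteq> interior N"
    and a_cont: "continuous_on ({x\<in>N. L1 x \<le> \<delta>} - \<Lambda>) a"
    and a_pos: "\<forall>x\<in>{x\<in>N. L1 x \<le> \<delta>} - \<Lambda>. a x > 0"
    and a_dot: "\<forall>x\<in>{x\<in>N. L1 x \<le> \<delta>} - \<Lambda>. has_lie_deriv \<Gamma> \<phi> ({x\<in>N. L1 x \<le> \<delta>} - \<Lambda>) a x 0"
    and a_inf: "\<exists>c>0. \<forall>x\<in>{x\<in>N. L1 x \<le> \<delta>} - \<Lambda>. c \<le> a x"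
    and f_cont: "continuous_on (frontier {x\<in>N. L1 x \<le> \<delta>}) f"
  shows "(\<exists>L2. (continuous_on {x\<in>N. L1 x \<le> \<delta>} L2 \<and>
                (\<forall>x\<in>\<Lambda>. L2 x = 0) \<and>
                second_lie_deriv_eq \<Gamma> \<phi> ({x\<in>N. L1 x \<le> \<delta>} - \<Lambda>) L2 (\<lambda>x. (a x)\<^sup>2 * L2 x) \<and>
                (\<forall>x\<in>frontier {x\<in>N. L1 x \<le> \<delta>}. L2 x = f x)) \<and>
              (\<forall>L3. (continuous_on {x\<in>N. L1 x \<le> \<delta>} L3 \<and>
                (\<forall>x\<in>\<Lambda>. L3 x = 0) \<and>
                second_lie_deriv_eq \<Gamma> \<phi> ({x\<in>N. L1 x \<le> \<delta>} - \<Lambda>) L3 (\<lambda>x. (a x)\<^sup>2 * L3 x) \<and>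
                (\<forall>x\<in>frontier {x\<in>N. L1 x \<le> \<delta>}. L3 x = f x))
                \<longrightarrow> (\<forall>x\<in>{x\<in>N. L1 x \<le> \<delta>}. L3 x = L2 x)))
       \<and> ((\<forall>x\<in>frontier {x\<in>N. L1 x \<le> \<delta>}. f x > 0) \<longrightarrow>
           (\<forall>L2. (continuous_on {x\<in>N. L1 x \<le> \<delta>} L2 \<and>
                (\<forall>x\<in>\<Lambda>. L2 x = 0) \<and>
                second_lie_deriv_eq \<Gamma> \<phi> ({x\<in>N. L1 x \<le> \<delta>} - \<Lambda>) L2 (\<lambda>x. (a x)\<^sup>2 * L2 x) \<and>
                (\<forall>x\<in>frontier {x\<in>N. L1 x \<le> \<delta>}. L2 x = f x))
              \<longrightarrow> (\<forall>x\<in>{x\<in>N. L1 x \<le> \<delta>} - \<Lambda>. L2 x > 0)))"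
proof -
  obtain L1' where ld: "\<forall>x\<in>N. has_lie_deriv \<Gamma> \<phi> N L1 x (L1' x)" "\<forall>x\<in>N. has_lie_deriv \<Gamma> \<phi> N L1' x (L1 x)"
    using cat unfolding catenary_def second_lie_deriv_eq_def by blast
  obtain c0 where c0: "c0 > 0" "\<forall>x\<in>{x\<in>N. L1 x \<le> \<delta>} - \<Lambda>. c0 \<le> a x" using a_inf by blast
  have inv: "flow_invariant \<Gamma> \<phi> \<Lambda>" using iso by (simp add: isolated_set_def)
  have catd: "compact N" "\<Lambda> \<subseteq> interior N" "continuous_on N L1" "\<forall>x\<in>\<Lambda>. L1 x = 0" "\<forall>x\<in>N - \<Lambda>. L1 x > 0"
    using cat by (auto simp: catenary_def isolating_nbhd_def)
  interpret cset2 \<Gamma> \<phi> \<Lambda> N L1 L1' \<delta> a f c0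
    by unfold_locales (use flow inv catd ld delta B_sub a_cont a_pos a_dot c0 f_cont in auto)
  have solI: "is_sol u \<longleftrightarrow> (continuous_on {x\<in>N. L1 x \<le> \<delta>} u \<and>
                (\<forall>x\<in>\<Lambda>. u x = 0) \<and>
                second_lie_deriv_eq \<Gamma> \<phi> ({x\<in>N. L1 x \<le> \<delta>} - \<Lambda>) u (\<lambda>x. (a x)\<^sup>2 * u x) \<and>
                (\<forall>x\<in>frontier {x\<in>N. L1 x \<le> \<delta>}. u x = f x))" for u
    by (simp add: is_sol_def)
  show ?thesis
  proof (intro conjI impI allI ballI)
    show "\<exists>L2. (continuous_on {x\<in>N. L1 x \<le> \<delta>} L2 \<and>
                (\<forall>x\<in>\<Lambda>. L2 x = 0) \<and>
                second_lie_deriv_eq \<Gamma> \<phi> ({x\<in>N. L1 x \<le> \<delta>} - \<Lambda>) L2 (\<lambda>x. (a x)\<^sup>2 * L2 x) \<and>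
                (\<forall>x\<in>frontier {x\<in>N. L1 x \<le> \<delta>}. L2 x = f x)) \<and>
              (\<forall>L3. (continuous_on {x\<in>N. L1 x \<le> \<delta>} L3 \<and>
                (\<forall>x\<in>\<Lambda>. L3 x = 0) \<and>
                second_lie_deriv_eq \<Gamma> \<phi> ({x\<in>N. L1 x \<le> \<delta>} - \<Lambda>) L3 (\<lambda>x. (a x)\<^sup>2 * L3 x) \<and>
                (\<forall>x\<in>frontier {x\<in>N. L1 x \<le> \<delta>}. L3 x = f x))
                \<longrightarrow> (\<forall>x\<in>{x\<in>N. L1 x \<le> \<delta>}. L3 x = L2 x))"
      using Lc_sol uniqueness[of _ Lc] unfolding solI[symmetric] by blast
  next
    fix L2 x
    assume fp: "\<forall>x\<in>frontier {x\<in>N. L1 x \<le> \<delta>}. f x > 0"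
      and s: "continuous_on {x\<in>N. L1 x \<le> \<delta>} L2 \<and>
                (\<forall>x\<in>\<Lambda>. L2 x = 0) \<and>
                second_lie_deriv_eq \<Gamma> \<phi> ({x\<in>N. L1 x \<le> \<delta>} - \<Lambda>) L2 (\<lambda>x. (a x)\<^sup>2 * L2 x) \<and>
                (\<forall>x\<in>frontier {x\<in>N. L1 x \<le> \<delta>}. L2 x = f x)"
      and x: "x \<in> {x\<in>N. L1 x \<le> \<delta>} - \<Lambda>"
    have "L2 x = Lc x" using uniqueness[of L2 Lc x] s Lc_sol x unfolding solI[symmetric] by blast
    then show "L2 x > 0" using Lc_pos[OF _ x] fp by simp
  qed
qed


end
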